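(* In the primal semi-discrete setting below, assume $D>0$ for all times, let $F$ be the energy-conserving mass flux, and let $u,D$ satisfy (M) and (C). (a) If $Q=q'F$ for some scalar function $q'(t)$ (with $q'F$ square integrable), then the energy $$E(t)=\int_\Omega\Big(\tfrac12 D|u|^2+g\big(\tfrac12D^2+bD\big)\Big)dS$$ is constant in time. (b) If $Q=qF$, where $q$ is the discrete potential vorticity, then both $E$ and the potential enstrophy $Z(t)=\int_\Omega q^2D\,dS$ are constant in time.
   Context: Primal setting. Let $\Omega$ be a smooth closed (compact, without boundary) oriented two-dimensional Riemannian surface (e.g. the sphere) with area form $dS$ and unit normal $\hat k$. For a tangent vector field $u$ let $u^\perp=\hat k\times u$; $\nabla$ and $\nabla\cdot$ denote the surface gradient and divergence, and $\nabla^\perp\gamma=\hat k\times\nabla\gamma$. $\Omega$ is divided into a mesh of elements $e$ with edges. Let $V^0\subset H^1(\Omega)$ be a finite-dimensional space of continuous piecewise polynomial functions containing the constants; $V^1\subset H(\mathrm{div},\Omega)$ a finite-dimensional space of piecewise polynomial tangent vector fields with continuous normal components across element edges; $V^2\subset L^2(\Omega)$ a finite-dimensional space of (discontinuous) piecewise polynomial functions containing the indicator function $\mathbf 1_e$ of every element; and assume $\nabla^\perp V^0\subset V^1$ and $\nabla\cdot V^1\subset V^2$. Fix a constant $g>0$, a time-independent Coriolis parameter $f\in L^\infty(\Omega)$ and a bottom topography $b\in V^2$. The unknowns are $u(t)\in V^1$, $D(t)\in V^2$, continuously differentiable in $t$ on a time interval, coupled to a mass flux $F(t)\in V^1$ and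 a potential-vorticity flux $Q(t)$ (a square-integrable tangent vector field), specified case by case, via (M) $\frac{d}{dt}\int_\Omega w\cdot u\,dS+\int_\Omega w\cdot Q^\perp\,dS-\int_\Omega(\nabla\cdot w)\big(g(D+b)+\tfrac12|u|^2\big)dS=0$ for all $w\in V^1$; (C) $\frac{d}{dt}\int_\Omega\phi D\,dS+\int_\Omega\phi\,\nabla\cdot F\,dS=0$ for all $\phi\in V^2$. The discrete vorticity $\zeta(t)\in V^0$ is defined by $\int_\Omega\gamma\zeta\,dS=-\int_\Omega\nabla^\perp\gamma\cdot u\,dS$ for all $\gamma\in V^0$. When $D>0$, the discrete potential vorticity $q(t)\in V^0$ is defined by $\int_\Omega\gamma qD\,dS=\int_\Omega\gamma(\zeta+f)\,dS$ for all $\gamma\in V^0$. The energy-conserving mass flux is the $F(t)\in V^1$ with $\int_\Omega w\cdot F\,dS=\int_\Omega w\cdot(Du)\,dS$ for all $w\in V^1$. *)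

theory Defs
  imports "HOL-Analysis.Analysis"
begin

text \<open>Points of the surface Omega have an abstract type 'p; the area form dS is the
measure M (Omega = space M).  Tangent vectors are represented in the ambient space
real^3; k is the unit normal field, and the perp of a tangent field w is k x w.\<close>

definition sq_int :: "'p measure \<Rightarrow> ('p \<Rightarrow> 'a::{banach,second_countable_topology}) \<Rightarrow> bool" where
  "sq_int M w \<longleftrightarrow> w \<in> borel_measurable M \<and> integrable M (\<lambda>x. (norm (w x))\<^sup>2)"

definition bounded_on :: "'p measure \<Rightarrow> ('p \<Rightarrow> 'a::real_normed_vector) \<Rightarrow> bool" where
  "bounded_on M w \<longleftrightarrow> (\<exists>C. \<forall>x\<in>space M. norm (w x) \<le> C)"

definition tangent :: "'p measure \<Rightarrow> ('p \<Rightarrow> real^3) \<Rightarrow> ('p \<Rightarrow> real^3) \<Rightarrow> bool" where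
  "tangent M k w \<longleftrightarrow> (\<forall>x\<in>space M. k x \<bullet> w x = 0)"

definition perp :: "('p \<Rightarrow> real^3) \<Rightarrow> ('p \<Rightarrow> real^3) \<Rightarrow> ('p \<Rightarrow> real^3)" where
  "perp k w = (\<lambda>x. cross3 (k x) (w x))"

definition fin_span :: "('p \<Rightarrow> 'a::real_vector) set \<Rightarrow> ('p \<Rightarrow> 'a) set" where
  "fin_span B = {(\<lambda>x. \<Sum>b\<in>B. c b *\<^sub>R b x) | c. True}"

definition findim :: "('p \<Rightarrow> 'a::real_vector) set \<Rightarrow> bool" where
  "findim V \<longleftrightarrow> (\<exists>B. finite B \<and> B \<subseteq> V \<and> V = fin_span B)"

definition C1_on :: "real set \<Rightarrow> (real \<Rightarrow> real) \<Rightarrow> bool" where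
  "C1_on I c \<longleftrightarrow> (\<exists>c'. (\<forall>t\<in>I. (c has_real_derivative c' t) (at t within I)) \<and> continuous_on I c')"

definition C1_curve :: "('p \<Rightarrow> 'a::real_vector) set \<Rightarrow> real set \<Rightarrow> (real \<Rightarrow> 'p \<Rightarrow> 'a) \<Rightarrow> bool" where
  "C1_curve V I u \<longleftrightarrow>
     (\<exists>B c. finite B \<and> B \<subseteq> V \<and> (\<forall>b\<in>B. C1_on I (c b)) \<and>
            (\<forall>t\<in>I. u t = (\<lambda>x. \<Sum>b\<in>B. c b t *\<^sub>R b x)))"

text \<open>Abstract surface calculus on a closed oriented surface: Hone plays the role of
H^1(Omega) with (weak) surface gradient grad, Hdiv the role of H(div,Omega) with
(weak) surface divergence div.  The listed properties all hold on a smooth closed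
oriented Riemannian surface.\<close>

definition surface_calculus ::
  "'p measure \<Rightarrow> ('p \<Rightarrow> real^3) \<Rightarrow> ('p \<Rightarrow> real) set \<Rightarrow> (('p \<Rightarrow> real) \<Rightarrow> ('p \<Rightarrow> real^3))
   \<Rightarrow> ('p \<Rightarrow> real^3) set \<Rightarrow> (('p \<Rightarrow> real^3) \<Rightarrow> ('p \<Rightarrow> real)) \<Rightarrow> bool" where
  "surface_calculus M k Hone grad Hdiv dvg \<longleftrightarrow>
     finite_measure M \<and>
     k \<in> borel_measurable M \<and> (\<forall>x\<in>space M. norm (k x) = 1) \<and>
     \<comment> \<open>H^1: a linear space of square-integrable functions with a linear gradient\<close>
     (\<forall>\<gamma>\<in>Hone. sq_int M \<gamma> \<and> sq_int M (grad \<gamma>) \<and> tangent M k (grad \<gamma>)) \<and>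
     (\<forall>\<gamma>\<in>Hone. \<forall>\<eta>\<in>Hone. \<forall>a c::real. (\<lambda>x. a * \<gamma> x + c * \<eta> x) \<in> Hone \<and>
        (\<forall>x\<in>space M. grad (\<lambda>x. a * \<gamma> x + c * \<eta> x) x = a *\<^sub>R grad \<gamma> x + c *\<^sub>R grad \<eta> x)) \<and>
     \<comment> \<open>product rule for bounded H^1 functions\<close>
     (\<forall>\<gamma>\<in>Hone. \<forall>\<eta>\<in>Hone. bounded_on M \<gamma> \<longrightarrow> bounded_on M \<eta> \<longrightarrow>
        (\<lambda>x. \<gamma> x * \<eta> x) \<in> Hone \<and>
        (\<forall>x\<in>space M. grad (\<lambda>x. \<gamma> x * \<eta> x) x = \<gamma> x *\<^sub>R grad \<eta> x + \<eta> x *\<^sub>R grad \<gamma> x)) \<and>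
     \<comment> \<open>H(div): a linear space of square-integrable tangent fields with square-integrable divergence\<close>
     (\<forall>w\<in>Hdiv. sq_int M w \<and> tangent M k w \<and> sq_int M (dvg w)) \<and>
     (\<forall>w\<in>Hdiv. \<forall>v\<in>Hdiv. \<forall>a c::real. (\<lambda>x. a *\<^sub>R w x + c *\<^sub>R v x) \<in> Hdiv \<and>
        (\<forall>x\<in>space M. dvg (\<lambda>x. a *\<^sub>R w x + c *\<^sub>R v x) x = a * dvg w x + c * dvg v x)) \<and>
     \<comment> \<open>Green's formula on the closed surface\<close>
     (\<forall>\<gamma>\<in>Hone. \<forall>w\<in>Hdiv.
        integral\<^sup>L M (\<lambda>x. \<gamma> x * dvg w x) = - integral\<^sup>L M (\<lambda>x. grad \<gamma> x \<bullet> w x)) \<and>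
     \<comment> \<open>perp-gradients are divergence free\<close>
     (\<forall>\<gamma>\<in>Hone. perp k (grad \<gamma>) \<in> Hdiv \<and> (\<forall>x\<in>space M. dvg (perp k (grad \<gamma>)) x = 0))"

text \<open>The discrete spaces V0, V1, V2 on a mesh (a finite family of elements).
Elements of each V^i are genuine elements of L^2 (a function in V^i with zero
L^2 norm vanishes).\<close>

definition discrete_spaces ::
  "'p measure \<Rightarrow> ('p \<Rightarrow> real^3) \<Rightarrow> ('p \<Rightarrow> real) set \<Rightarrow> (('p \<Rightarrow> real) \<Rightarrow> ('p \<Rightarrow> real^3))
   \<Rightarrow> ('p \<Rightarrow> real^3) set \<Rightarrow> (('p \<Rightarrow> real^3) \<Rightarrow> ('p \<Rightarrow> real)) \<Rightarrow> 'p set set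
   \<Rightarrow> ('p \<Rightarrow> real) set \<Rightarrow> ('p \<Rightarrow> real^3) set \<Rightarrow> ('p \<Rightarrow> real) set \<Rightarrow> bool" where
  "discrete_spaces M k Hone grad Hdiv dvg mesh V0 V1 V2 \<longleftrightarrow>
     \<comment> \<open>mesh\<close>
     finite mesh \<and> (\<forall>e\<in>mesh. e \<in> sets M) \<and> \<Union>mesh = space M \<and>
     (\<forall>e1\<in>mesh. \<forall>e2\<in>mesh. e1 \<noteq> e2 \<longrightarrow> emeasure M (e1 \<inter> e2) = 0) \<and>
     \<comment> \<open>finite dimensionality\<close>
     findim V0 \<and> findim V1 \<and> findim V2 \<and>
     \<comment> \<open>V0 subset of H^1, contains constants\<close>
     V0 \<subseteq> Hone \<and> (\<forall>a::real. (\<lambda>x. a) \<in> V0) \<and>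
     (\<forall>\<gamma>\<in>V0. bounded_on M \<gamma>) \<and>
     \<comment> \<open>V1 subset of H(div)\<close>
     V1 \<subseteq> Hdiv \<and> (\<forall>w\<in>V1. bounded_on M w) \<and>
     \<comment> \<open>V2 subset of L^2, contains the element indicators\<close>
     (\<forall>\<phi>\<in>V2. sq_int M \<phi> \<and> bounded_on M \<phi>) \<and>
     (\<forall>e\<in>mesh. indicator e \<in> V2) \<and>
     \<comment> \<open>L^2 definiteness on the discrete spaces\<close>
     (\<forall>\<gamma>\<in>V0. integral\<^sup>L M (\<lambda>x. (\<gamma> x)\<^sup>2) = 0 \<longrightarrow> (\<forall>x\<in>space M. \<gamma> x = 0)) \<and>
     (\<forall>w\<in>V1. integral\<^sup>L M (\<lambda>x. w x \<bullet> w x) = 0 \<longrightarrow> (\<forall>x\<in>space M. w x = 0)) \<and>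
     (\<forall>\<phi>\<in>V2. integral\<^sup>L M (\<lambda>x. (\<phi> x)\<^sup>2) = 0 \<longrightarrow> (\<forall>x\<in>space M. \<phi> x = 0)) \<and>
     \<comment> \<open>compatibility: perp-grad V0 in V1 and div V1 in V2\<close>
     (\<forall>\<gamma>\<in>V0. perp k (grad \<gamma>) \<in> V1) \<and> (\<forall>w\<in>V1. dvg w \<in> V2)"

definition energy :: "'p measure \<Rightarrow> real \<Rightarrow> ('p \<Rightarrow> real) \<Rightarrow> ('p \<Rightarrow> real^3) \<Rightarrow> ('p \<Rightarrow> real) \<Rightarrow> real" where
  "energy M g b u D = integral\<^sup>L M (\<lambda>x. D x * (norm (u x))\<^sup>2 / 2 + g * ((D x)\<^sup>2 / 2 + b x * D x))"

definition enstrophy :: "'p measure \<Rightarrow> ('p \<Rightarrow> real) \<Rightarrow> ('p \<Rightarrow> real) \<Rightarrow> real" where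
  "enstrophy M q D = integral\<^sup>L M (\<lambda>x. (q x)\<^sup>2 * D x)"

definition is_disc_vorticity ::
  "'p measure \<Rightarrow> ('p \<Rightarrow> real^3) \<Rightarrow> (('p \<Rightarrow> real) \<Rightarrow> ('p \<Rightarrow> real^3)) \<Rightarrow> ('p \<Rightarrow> real) set
   \<Rightarrow> ('p \<Rightarrow> real^3) \<Rightarrow> ('p \<Rightarrow> real) \<Rightarrow> bool" where
  "is_disc_vorticity M k grad V0 u \<zeta> \<longleftrightarrow> \<zeta> \<in> V0 \<and>
     (\<forall>\<gamma>\<in>V0. integral\<^sup>L M (\<lambda>x. \<gamma> x * \<zeta> x) = - integral\<^sup>L M (\<lambda>x. perp k (grad \<gamma>) x \<bullet> u x))"

definition is_disc_pv ::
  "'p measure \<Rightarrow> ('p \<Rightarrow> real) set \<Rightarrow> ('p \<Rightarrow> real) \<Rightarrow> ('p \<Rightarrow> real) \<Rightarrow> ('p \<Rightarrow> real)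
   \<Rightarrow> ('p \<Rightarrow> real) \<Rightarrow> bool" where
  "is_disc_pv M V0 f D \<zeta> q \<longleftrightarrow> q \<in> V0 \<and>
     (\<forall>\<gamma>\<in>V0. integral\<^sup>L M (\<lambda>x. \<gamma> x * q x * D x) = integral\<^sup>L M (\<lambda>x. \<gamma> x * (\<zeta> x + f x)))"

end

theory Submission
  imports Defs "Jordan_Normal_Form.Determinant"
begin

no_notation Matrix.scalar_prod (infix "\<bullet>" 70)
no_notation Matrix.vec_index (infixl "$" 100)

definition bm :: "'p measure \<Rightarrow> ('p \<Rightarrow> real) \<Rightarrow> bool" where
  "bm M \<phi> \<longleftrightarrow> \<phi> \<in> borel_measurable M \<and> bounded_on M \<phi>"

lemma bm_cong: "bm M \<phi> \<Longrightarrow> (\<And>x. x \<in> space M \<Longrightarrow> \<phi> x = \<psi> x) \<Longrightarrow> bm M \<psi>"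
  unfolding bm_def bounded_on_def
  by (metis (no_types, lifting) measurable_cong)

lemma bm_const: "bm M (\<lambda>x. c)"
  unfolding bm_def bounded_on_def by auto

lemma bm_add: "bm M f \<Longrightarrow> bm M g \<Longrightarrow> bm M (\<lambda>x. f x + g x)"
  unfolding bm_def bounded_on_def
proof (intro conjI)
  assume a: "f \<in> borel_measurable M \<and> (\<exists>C. \<forall>x\<in>space M. norm (f x) \<le> C)"
     "g \<in> borel_measurable M \<and> (\<exists>C. \<forall>x\<in>space M. norm (g x) \<le> C)"
  then show "(\<lambda>x. f x + g x) \<in> borel_measurable M" by auto
  from a obtain C1 C2 where "\<forall>x\<in>space M. norm (f x) \<le> C1" "\<forall>x\<in>space M. norm (g x) \<le> C2" by auto
  then show "\<exists>C. \<forall>x\<in>space M. norm (f x + g x) \<le> C"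
    by (intro exI[of _ "C1+C2"]) (smt (verit) real_norm_def)
qed

lemma bm_mult: "bm M f \<Longrightarrow> bm M g \<Longrightarrow> bm M (\<lambda>x. f x * g x)"
  unfolding bm_def bounded_on_def
proof (intro conjI)
  assume a: "f \<in> borel_measurable M \<and> (\<exists>C. \<forall>x\<in>space M. norm (f x) \<le> C)"
     "g \<in> borel_measurable M \<and> (\<exists>C. \<forall>x\<in>space M. norm (g x) \<le> C)"
  then show "(\<lambda>x. f x * g x) \<in> borel_measurable M" by auto
  from a obtain C1 C2 where c: "\<forall>x\<in>space M. norm (f x) \<le> C1" "\<forall>x\<in>space M. norm (g x) \<le> C2" by auto
  show "\<exists>C. \<forall>x\<in>space M. norm (f x * g x) \<le> C"
  proof (intro exI[of _ "C1*C2"] ballI)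
    fix x assume "x \<in> space M"
    then have "norm (f x) \<le> C1" "norm (g x) \<le> C2" using c by auto
    then show "norm (f x * g x) \<le> C1 * C2"
      by (simp add: abs_mult mult_mono')
  qed
qed

lemma bm_sum: "finite S \<Longrightarrow> (\<And>i. i \<in> S \<Longrightarrow> bm M (f i)) \<Longrightarrow> bm M (\<lambda>x. \<Sum>i\<in>S. f i x)"
  by (induction S rule: finite_induct) (auto intro: bm_add bm_const)

lemma bm_integrable: "finite_measure M \<Longrightarrow> bm M f \<Longrightarrow> integrable M f"
  unfolding bm_def bounded_on_def
  by (metis AE_I2 finite_measure.integrable_const_bound)

definition bmv :: "'p measure \<Rightarrow> ('p \<Rightarrow> real^3) \<Rightarrow> bool" where
  "bmv M w \<longleftrightarrow> w \<in> borel_measurable M \<and> bounded_on M w"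

lemma bm_inner: "bmv M v \<Longrightarrow> bmv M w \<Longrightarrow> bm M (\<lambda>x. v x \<bullet> w x)"
  unfolding bm_def bmv_def bounded_on_def
proof (intro conjI)
  assume a: "v \<in> borel_measurable M \<and> (\<exists>C. \<forall>x\<in>space M. norm (v x) \<le> C)"
     "w \<in> borel_measurable M \<and> (\<exists>C. \<forall>x\<in>space M. norm (w x) \<le> C)"
  then show "(\<lambda>x. v x \<bullet> w x) \<in> borel_measurable M" by auto
  from a obtain C1 C2 where c: "\<forall>x\<in>space M. norm (v x) \<le> C1" "\<forall>x\<in>space M. norm (w x) \<le> C2" by auto
  show "\<exists>C. \<forall>x\<in>space M. norm (v x \<bullet> w x) \<le> C"
  proof (intro exI[of _ "C1*C2"] ballI)
    fix x assume "x \<in> space M"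
    then have "norm (v x) \<le> C1" "norm (w x) \<le> C2" using c by auto
    then show "norm (v x \<bullet> w x) \<le> C1 * C2"
      by (smt (verit) mult_mono' Cauchy_Schwarz_ineq2 norm_ge_zero real_norm_def)
  qed
qed

lemma bm_comp: "bmv M w \<Longrightarrow> bm M (\<lambda>x. w x $ l)"
proof -
  assume a: "bmv M w"
  have "bmv M (\<lambda>x. axis l 1)" unfolding bmv_def bounded_on_def by auto
  then have "bm M (\<lambda>x. w x \<bullet> axis l 1)" using a by (rule bm_inner[rotated])
  then show ?thesis by (simp add: inner_axis)
qed

definition PD :: "'p measure \<Rightarrow> real set \<Rightarrow> real \<Rightarrow> (real \<Rightarrow> 'p \<Rightarrow> real) \<Rightarrow> ('p \<Rightarrow> real) \<Rightarrow> bool" where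
  "PD M I t h h' \<longleftrightarrow> (\<exists>L. (\<forall>(m,m',\<phi>)\<in>set L. (m has_real_derivative m') (at t within I) \<and> bm M \<phi>) \<and>
     (\<forall>s\<in>I. \<forall>x\<in>space M. h s x = (\<Sum>(m,m',\<phi>)\<leftarrow>L. m s * \<phi> x)) \<and>
     (\<forall>x\<in>space M. h' x = (\<Sum>(m,m',\<phi>)\<leftarrow>L. m' * \<phi> x)))"

lemma PD_cong: "PD M I t h h' \<Longrightarrow> (\<And>s x. s \<in> I \<Longrightarrow> x \<in> space M \<Longrightarrow> h s x = k s x) \<Longrightarrow>
   (\<And>x. x \<in> space M \<Longrightarrow> h' x = k' x) \<Longrightarrow> PD M I t k k'"
  unfolding PD_def by metis

lemma PD_zero: "PD M I t (\<lambda>s x. 0) (\<lambda>x. 0)"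
  unfolding PD_def by (intro exI[of _ "[]"]) auto

lemma PD_coef: "(c has_real_derivative c') (at t within I) \<Longrightarrow> bm M \<phi> \<Longrightarrow>
   PD M I t (\<lambda>s x. c s * \<phi> x) (\<lambda>x. c' * \<phi> x)"
  unfolding PD_def by (intro exI[of _ "[(c,c',\<phi>)]"]) auto

lemma PD_const: "bm M \<phi> \<Longrightarrow> PD M I t (\<lambda>s x. \<phi> x) (\<lambda>x. 0)"
  using PD_coef[of "\<lambda>s. 1" 0 t I M \<phi>] by simp

lemma PD_add: "PD M I t h h' \<Longrightarrow> PD M I t k k' \<Longrightarrow> PD M I t (\<lambda>s x. h s x + k s x) (\<lambda>x. h' x + k' x)"
  unfolding PD_def
proof (elim exE conjE)
  fix L1 L2
  assume "\<forall>(m,m',\<phi>)\<in>set L1. (m has_real_derivative m') (at t within I) \<and> bm M \<phi>"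
    "\<forall>s\<in>I. \<forall>x\<in>space M. h s x = (\<Sum>(m,m',\<phi>)\<leftarrow>L1. m s * \<phi> x)"
    "\<forall>x\<in>space M. h' x = (\<Sum>(m,m',\<phi>)\<leftarrow>L1. m' * \<phi> x)"
    "\<forall>(m,m',\<phi>)\<in>set L2. (m has_real_derivative m') (at t within I) \<and> bm M \<phi>"
    "\<forall>s\<in>I. \<forall>x\<in>space M. k s x = (\<Sum>(m,m',\<phi>)\<leftarrow>L2. m s * \<phi> x)"
    "\<forall>x\<in>space M. k' x = (\<Sum>(m,m',\<phi>)\<leftarrow>L2. m' * \<phi> x)"
  then show "\<exists>L. (\<forall>(m,m',\<phi>)\<in>set L. (m has_real_derivative m') (at t within I) \<and> bm M \<phi>) \<and>
     (\<forall>s\<in>I. \<forall>x\<in>space M. h s x + k s x = (\<Sum>(m,m',\<phi>)\<leftarrow>L. m s * \<phi> x)) \<and>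
     (\<forall>x\<in>space M. h' x + k' x = (\<Sum>(m,m',\<phi>)\<leftarrow>L. m' * \<phi> x))"
    by (intro exI[of _ "L1 @ L2"]) auto
qed

lemma PD_sum: "finite S \<Longrightarrow> (\<And>i. i \<in> S \<Longrightarrow> PD M I t (h i) (h' i)) \<Longrightarrow>
   PD M I t (\<lambda>s x. \<Sum>i\<in>S. h i s x) (\<lambda>x. \<Sum>i\<in>S. h' i x)"
proof (induction S rule: finite_induct)
  case empty then show ?case by (simp add: PD_zero)
next
  case (insert a S)
  have "PD M I t (\<lambda>s x. h a s x + (\<Sum>i\<in>S. h i s x)) (\<lambda>x. h' a x + (\<Sum>i\<in>S. h' i x))"
    using insert by (intro PD_add) auto
  then show ?case using insert by simp
qed

lemma PD_mult_single:
  assumes t: "t \<in> I" and c: "(c has_real_derivative c') (at t within I)" and \<phi>: "bm M \<phi>"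
    and k: "PD M I t k k'"
  shows "PD M I t (\<lambda>s x. c s * \<phi> x * k s x) (\<lambda>x. c' * \<phi> x * k t x + c t * \<phi> x * k' x)"
proof -
  from k obtain L where L: "\<forall>(m,m',\<psi>)\<in>set L. (m has_real_derivative m') (at t within I) \<and> bm M \<psi>"
    "\<forall>s\<in>I. \<forall>x\<in>space M. k s x = (\<Sum>(m,m',\<psi>)\<leftarrow>L. m s * \<psi> x)"
    "\<forall>x\<in>space M. k' x = (\<Sum>(m,m',\<psi>)\<leftarrow>L. m' * \<psi> x)" unfolding PD_def by blast
  define L' where "L' = map (\<lambda>(m,m',\<psi>). (\<lambda>s. c s * m s, c t * m' + c' * m t, \<lambda>x. \<phi> x * \<psi> x)) L"
  have 1: "\<forall>(m,m',\<psi>)\<in>set L'. (m has_real_derivative m') (at t within I) \<and> bm M \<psi>"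
    using L(1) c \<phi> unfolding L'_def by (auto intro!: DERIV_mult' bm_mult)
  have e1: "(\<Sum>(m,m',\<psi>)\<leftarrow>L'. m s * \<psi> x) = c s * \<phi> x * (\<Sum>(m,m',\<psi>)\<leftarrow>L. m s * \<psi> x)" for s x
    unfolding L'_def by (induction L) (auto simp: algebra_simps)
  have e2: "(\<Sum>(m,m',\<psi>)\<leftarrow>L'. m' * \<psi> x) = c' * \<phi> x * (\<Sum>(m,m',\<psi>)\<leftarrow>L. m t * \<psi> x)
      + c t * \<phi> x * (\<Sum>(m,m',\<psi>)\<leftarrow>L. m' * \<psi> x)" for x
    unfolding L'_def by (induction L) (auto simp: algebra_simps)
  show ?thesis unfolding PD_def
    by (intro exI[of _ L'] conjI 1) (use L t e1 e2 in auto)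
qed

lemma PD_mult:
  assumes t: "t \<in> I" and h: "PD M I t h h'" and k: "PD M I t k k'"
  shows "PD M I t (\<lambda>s x. h s x * k s x) (\<lambda>x. h' x * k t x + h t x * k' x)"
proof -
  from h obtain L where L: "\<forall>(m,m',\<psi>)\<in>set L. (m has_real_derivative m') (at t within I) \<and> bm M \<psi>"
    "\<forall>s\<in>I. \<forall>x\<in>space M. h s x = (\<Sum>(m,m',\<psi>)\<leftarrow>L. m s * \<psi> x)"
    "\<forall>x\<in>space M. h' x = (\<Sum>(m,m',\<psi>)\<leftarrow>L. m' * \<psi> x)" unfolding PD_def by blast
  have "PD M I t (\<lambda>s x. (\<Sum>(m,m',\<psi>)\<leftarrow>L. m s * \<psi> x) * k s x)
     (\<lambda>x. (\<Sum>(m,m',\<psi>)\<leftarrow>L. m' * \<psi> x) * k t x + (\<Sum>(m,m',\<psi>)\<leftarrow>L. m t * \<psi> x) * k' x)"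
    using L(1)
  proof (induction L)
    case Nil then show ?case by (simp add: PD_zero)
  next
    case (Cons a L)
    obtain m m' \<psi> where a: "a = (m,m',\<psi>)" by (cases a)
    have "PD M I t (\<lambda>s x. m s * \<psi> x * k s x + (\<Sum>(m,m',\<psi>)\<leftarrow>L. m s * \<psi> x) * k s x)
      (\<lambda>x. (m' * \<psi> x * k t x + m t * \<psi> x * k' x) + ((\<Sum>(m,m',\<psi>)\<leftarrow>L. m' * \<psi> x) * k t x + (\<Sum>(m,m',\<psi>)\<leftarrow>L. m t * \<psi> x) * k' x))"
      using Cons a by (intro PD_add PD_mult_single t k) auto
    then show ?case unfolding a by (rule PD_cong) (auto simp: algebra_simps)
  qed
  then show ?thesis by (rule PD_cong) (use L t in auto)
qed

lemma integral_sum_list: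
  assumes "\<forall>l\<in>set L. integrable M (f l)"
  shows "integrable M (\<lambda>x. \<Sum>l\<leftarrow>L. f l x) \<and> (\<integral>x. (\<Sum>l\<leftarrow>L. f l x) \<partial>M) = (\<Sum>l\<leftarrow>L. \<integral>x. f l x \<partial>M)"
  using assms by (induction L) auto

lemma PD_deriv:
  assumes fm: "finite_measure M" and t: "t \<in> I" and h: "PD M I t h h'"
  shows "((\<lambda>s. \<integral>x. h s x \<partial>M) has_real_derivative (\<integral>x. h' x \<partial>M)) (at t within I)"
proof -
  from h obtain L where L: "\<forall>(m,m',\<psi>)\<in>set L. (m has_real_derivative m') (at t within I) \<and> bm M \<psi>"
    "\<forall>s\<in>I. \<forall>x\<in>space M. h s x = (\<Sum>(m,m',\<psi>)\<leftarrow>L. m s * \<psi> x)"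
    "\<forall>x\<in>space M. h' x = (\<Sum>(m,m',\<psi>)\<leftarrow>L. m' * \<psi> x)" unfolding PD_def by blast
  have int: "integrable M \<psi>" if "(m,m',\<psi>) \<in> set L" for m m' \<psi>
    using L(1) that fm bm_integrable by fastforce
  have I1: "(\<integral>x. h s x \<partial>M) = (\<Sum>(m,m',\<psi>)\<leftarrow>L. m s * (\<integral>x. \<psi> x \<partial>M))" if "s \<in> I" for s
  proof -
    have "(\<integral>x. h s x \<partial>M) = (\<integral>x. (\<Sum>l\<leftarrow>L. fst l s * snd (snd l) x) \<partial>M)"
      using L(2) that by (intro Bochner_Integration.integral_cong) (auto simp: split_def)
    also have "\<dots> = (\<Sum>l\<leftarrow>L. \<integral>x. fst l s * snd (snd l) x \<partial>M)"
      using int by (intro conjunct2[OF integral_sum_list]) (auto simp: split_def)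
    also have "\<dots> = (\<Sum>(m,m',\<psi>)\<leftarrow>L. m s * (\<integral>x. \<psi> x \<partial>M))"
      by (simp add: split_def)
    finally show ?thesis .
  qed
  have I2: "(\<integral>x. h' x \<partial>M) = (\<Sum>(m,m',\<psi>)\<leftarrow>L. m' * (\<integral>x. \<psi> x \<partial>M))"
  proof -
    have "(\<integral>x. h' x \<partial>M) = (\<integral>x. (\<Sum>l\<leftarrow>L. fst (snd l) * snd (snd l) x) \<partial>M)"
      using L(3) by (intro Bochner_Integration.integral_cong) (auto simp: split_def)
    also have "\<dots> = (\<Sum>l\<leftarrow>L. \<integral>x. fst (snd l) * snd (snd l) x \<partial>M)"
      using int by (intro conjunct2[OF integral_sum_list]) (auto simp: split_def)
    also have "\<dots> = (\<Sum>(m,m',\<psi>)\<leftarrow>L. m' * (\<integral>x. \<psi> x \<partial>M))"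
      by (simp add: split_def)
    finally show ?thesis .
  qed
  have D: "((\<lambda>s. (\<Sum>(m,m',\<psi>)\<leftarrow>L. m s * (\<integral>x. \<psi> x \<partial>M))) has_real_derivative
      (\<Sum>(m,m',\<psi>)\<leftarrow>L. m' * (\<integral>x. \<psi> x \<partial>M))) (at t within I)"
    using L(1)
  proof (induction L)
    case Nil then show ?case by simp
  next
    case (Cons a L)
    then show ?case by (cases a) (auto intro!: DERIV_add DERIV_cmult_right)
  qed
  show ?thesis unfolding I2
    by (rule has_field_derivative_transform_within[where d=1, OF D]) (auto simp: I1 t)
qed

lemma PD_bm:
  assumes h: "PD M I t h h'" and s: "s \<in> I"
  shows "bm M (h s)" "bm M h'"
proof -
  from h obtain L where L: "\<forall>(m,m',\<psi>)\<in>set L. (m has_real_derivative m') (at t within I) \<and> bm M \<psi>"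
    "\<forall>s\<in>I. \<forall>x\<in>space M. h s x = (\<Sum>(m,m',\<psi>)\<leftarrow>L. m s * \<psi> x)"
    "\<forall>x\<in>space M. h' x = (\<Sum>(m,m',\<psi>)\<leftarrow>L. m' * \<psi> x)" unfolding PD_def by blast
  have "bm M (\<lambda>x. (\<Sum>(m,m',\<psi>)\<leftarrow>L. m s * \<psi> x)) \<and> bm M (\<lambda>x. (\<Sum>(m,m',\<psi>)\<leftarrow>L. m' * \<psi> x))"
    using L(1)
  proof (induction L)
    case Nil then show ?case by (simp add: bm_const)
  next
    case (Cons a L)
    then show ?case by (cases a) (auto intro!: bm_add bm_mult bm_const)
  qed
  then show "bm M (h s)" "bm M h'" using L s by (auto intro: bm_cong)
qed



lemma fin_span_zero: "(\<lambda>x. 0) \<in> fin_span B"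
  unfolding fin_span_def by (intro CollectI exI[of _ "\<lambda>_. 0"]) auto

lemma fin_span_add: "f \<in> fin_span B \<Longrightarrow> g \<in> fin_span B \<Longrightarrow> (\<lambda>x. f x + g x) \<in> fin_span B"
proof -
  assume "f \<in> fin_span B" "g \<in> fin_span B"
  then obtain c1 c2 where "f = (\<lambda>x. \<Sum>b\<in>B. c1 b *\<^sub>R b x)" "g = (\<lambda>x. \<Sum>b\<in>B. c2 b *\<^sub>R b x)"
    unfolding fin_span_def by auto
  then have "(\<lambda>x. f x + g x) = (\<lambda>x. \<Sum>b\<in>B. (c1 b + c2 b) *\<^sub>R b x)"
    by (simp add: sum.distrib scaleR_add_left)
  then show ?thesis unfolding fin_span_def by auto
qed

lemma fin_span_scale: "f \<in> fin_span B \<Longrightarrow> (\<lambda>x. a *\<^sub>R f x) \<in> fin_span B"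
proof -
  assume "f \<in> fin_span B"
  then obtain c1 where "f = (\<lambda>x. \<Sum>b\<in>B. c1 b *\<^sub>R b x)"
    unfolding fin_span_def by auto
  then have "(\<lambda>x. a *\<^sub>R f x) = (\<lambda>x. \<Sum>b\<in>B. (a * c1 b) *\<^sub>R b x)"
    by (simp add: scaleR_sum_right)
  then show ?thesis unfolding fin_span_def by auto
qed

lemma fin_span_lincomb: "finite S \<Longrightarrow> S \<subseteq> fin_span B \<Longrightarrow> (\<lambda>x. \<Sum>s\<in>S. a s *\<^sub>R s x) \<in> fin_span B"
proof (induction S rule: finite_induct)
  case empty then show ?case by (simp add: fin_span_zero)
next
  case (insert s S)
  then have "(\<lambda>x. a s *\<^sub>R s x + (\<Sum>s\<in>S. a s *\<^sub>R s x)) \<in> fin_span B"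
    by (intro fin_span_add fin_span_scale) auto
  then show ?case using insert by simp
qed

lemma findim_lincomb: "findim V \<Longrightarrow> finite S \<Longrightarrow> S \<subseteq> V \<Longrightarrow> (\<lambda>x. \<Sum>s\<in>S. a s *\<^sub>R s x) \<in> V"
  unfolding findim_def using fin_span_lincomb by blast

lemma findim_add: "findim V \<Longrightarrow> f \<in> V \<Longrightarrow> g \<in> V \<Longrightarrow> (\<lambda>x. f x + g x) \<in> V"
  unfolding findim_def using fin_span_add by blast

lemma findim_scale: "findim V \<Longrightarrow> f \<in> V \<Longrightarrow> (\<lambda>x. a *\<^sub>R f x) \<in> V"
  unfolding findim_def using fin_span_scale by blast

lemma cross_cross_inner:
  fixes k a b :: "real^3"
  assumes "k \<bullet> k = 1" "k \<bullet> a = 0" "k \<bullet> b = 0"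
  shows "cross3 k a \<bullet> cross3 k b = a \<bullet> b"
proof -
  have "cross3 k a \<bullet> cross3 k b = (k \<bullet> k) * (a \<bullet> b) - (k \<bullet> b) * (a \<bullet> k)"
    by (simp add: cross3_simps)
  then show ?thesis using assms by (simp add: inner_commute)
qed



locale sw =
  fixes M :: "'p measure" and k :: "'p \<Rightarrow> real^3"
    and Hone :: "('p \<Rightarrow> real) set" and grad :: "('p \<Rightarrow> real) \<Rightarrow> ('p \<Rightarrow> real^3)"
    and Hdiv :: "('p \<Rightarrow> real^3) set" and dvg :: "('p \<Rightarrow> real^3) \<Rightarrow> ('p \<Rightarrow> real)"
    and mesh :: "'p set set"
    and V0 :: "('p \<Rightarrow> real) set" and V1 :: "('p \<Rightarrow> real^3) set" and V2 :: "('p \<Rightarrow> real) set"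
    and g :: real and f b :: "'p \<Rightarrow> real" and I :: "real set"
    and u F Q :: "real \<Rightarrow> 'p \<Rightarrow> real^3" and D :: "real \<Rightarrow> 'p \<Rightarrow> real"
    and B1 :: "('p \<Rightarrow> real^3) set" and c :: "('p \<Rightarrow> real^3) \<Rightarrow> real \<Rightarrow> real" and c' :: "('p \<Rightarrow> real^3) \<Rightarrow> real \<Rightarrow> real"
    and B2 :: "('p \<Rightarrow> real) set" and d :: "('p \<Rightarrow> real) \<Rightarrow> real \<Rightarrow> real" and d' :: "('p \<Rightarrow> real) \<Rightarrow> real \<Rightarrow> real"
  assumes calc: "surface_calculus M k Hone grad Hdiv dvg"
    and spaces: "discrete_spaces M k Hone grad Hdiv dvg mesh V0 V1 V2"
    and f_Linf: "f \<in> borel_measurable M" "bounded_on M f"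
    and b_V2: "b \<in> V2"
    and u_V1: "\<forall>t\<in>I. u t \<in> V1"
    and D_V2: "\<forall>t\<in>I. D t \<in> V2"
    and D_pos: "\<forall>t\<in>I. \<forall>x\<in>space M. D t x > 0"
    and F_def: "\<forall>t\<in>I. F t \<in> V1 \<and>
                  (\<forall>w\<in>V1. integral\<^sup>L M (\<lambda>x. w x \<bullet> F t x) = integral\<^sup>L M (\<lambda>x. w x \<bullet> (D t x *\<^sub>R u t x)))"
    and mom: "\<forall>t\<in>I. \<forall>w\<in>V1.
               ((\<lambda>s. integral\<^sup>L M (\<lambda>x. w x \<bullet> u s x)) has_real_derivative
                  (- integral\<^sup>L M (\<lambda>x. w x \<bullet> perp k (Q t) x)
                   + integral\<^sup>L M (\<lambda>x. dvg w x * (g * (D t x + b x) + (norm (u t x))\<^sup>2 / 2))))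
                (at t within I)"
    and cont: "\<forall>t\<in>I. \<forall>\<phi>\<in>V2.
               ((\<lambda>s. integral\<^sup>L M (\<lambda>x. \<phi> x * D s x)) has_real_derivative
                  (- integral\<^sup>L M (\<lambda>x. \<phi> x * dvg (F t) x)))
                (at t within I)"
    and B1: "finite B1" "B1 \<subseteq> V1" "\<forall>\<beta>\<in>B1. \<forall>t\<in>I. (c \<beta> has_real_derivative c' \<beta> t) (at t within I)"
       "\<forall>t\<in>I. u t = (\<lambda>x. \<Sum>\<beta>\<in>B1. c \<beta> t *\<^sub>R \<beta> x)"
    and B2: "finite B2" "B2 \<subseteq> V2" "\<forall>\<beta>\<in>B2. \<forall>t\<in>I. (d \<beta> has_real_derivative d' \<beta> t) (at t within I)"
       "\<forall>t\<in>I. D t = (\<lambda>x. \<Sum>\<beta>\<in>B2. d \<beta> t *\<^sub>R \<beta> x)"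
    and nontriv: "\<forall>t\<in>I. at t within I \<noteq> bot"
begin

definition udot where "udot t = (\<lambda>x. \<Sum>\<beta>\<in>B1. c' \<beta> t *\<^sub>R \<beta> x)"
definition Ddot where "Ddot t = (\<lambda>x. \<Sum>\<beta>\<in>B2. d' \<beta> t *\<^sub>R \<beta> x)"

lemma fm: "finite_measure M" using calc unfolding surface_calculus_def by auto

lemma k1: "x \<in> space M \<Longrightarrow> k x \<bullet> k x = 1"
  using calc unfolding surface_calculus_def by (auto simp: power2_norm_eq_inner[symmetric])

lemma findims: "findim V0" "findim V1" "findim V2"
  using spaces unfolding discrete_spaces_def by auto

lemma sp: "V0 \<subseteq> Hone" "Ball V0 (bounded_on M)" "V1 \<subseteq> Hdiv" "Ball V1 (bounded_on M)"
   "\<forall>\<phi>\<in>V2. sq_int M \<phi> \<and> bounded_on M \<phi>"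
   "\<forall>\<gamma>\<in>V0. integral\<^sup>L M (\<lambda>x. (\<gamma> x)\<^sup>2) = 0 \<longrightarrow> (\<forall>x\<in>space M. \<gamma> x = 0)"
   "\<forall>\<phi>\<in>V2. integral\<^sup>L M (\<lambda>x. (\<phi> x)\<^sup>2) = 0 \<longrightarrow> (\<forall>x\<in>space M. \<phi> x = 0)"
   "\<forall>\<gamma>\<in>V0. perp k (grad \<gamma>) \<in> V1" "\<forall>w\<in>V1. dvg w \<in> V2"
  using spaces unfolding discrete_spaces_def by auto

lemma cc: "\<forall>\<gamma>\<in>Hone. sq_int M \<gamma> \<and> sq_int M (grad \<gamma>) \<and> tangent M k (grad \<gamma>)"
   "\<forall>w\<in>Hdiv. sq_int M w \<and> tangent M k w \<and> sq_int M (dvg w)"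
   "\<forall>\<gamma>\<in>Hone. \<forall>\<eta>\<in>Hone. bounded_on M \<gamma> \<longrightarrow> bounded_on M \<eta> \<longrightarrow>
        (\<lambda>x. \<gamma> x * \<eta> x) \<in> Hone \<and>
        (\<forall>x\<in>space M. grad (\<lambda>x. \<gamma> x * \<eta> x) x = \<gamma> x *\<^sub>R grad \<eta> x + \<eta> x *\<^sub>R grad \<gamma> x)"
   "\<forall>\<gamma>\<in>Hone. \<forall>w\<in>Hdiv.
        integral\<^sup>L M (\<lambda>x. \<gamma> x * dvg w x) = - integral\<^sup>L M (\<lambda>x. grad \<gamma> x \<bullet> w x)"
   "\<forall>\<gamma>\<in>Hone. perp k (grad \<gamma>) \<in> Hdiv \<and> (\<forall>x\<in>space M. dvg (perp k (grad \<gamma>)) x = 0)"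
  using calc unfolding surface_calculus_def by auto

lemma V0_Hone: "\<gamma> \<in> V0 \<Longrightarrow> \<gamma> \<in> Hone"
  using sp by auto

lemma V0_bm: "\<gamma> \<in> V0 \<Longrightarrow> bm M \<gamma>"
  using sp cc unfolding bm_def sq_int_def by blast

lemma V0_bounded: "\<gamma> \<in> V0 \<Longrightarrow> bounded_on M \<gamma>"
  using V0_bm unfolding bm_def by auto

lemma V1_Hdiv: "w \<in> V1 \<Longrightarrow> w \<in> Hdiv"
  using sp by auto

lemma V1_bmv: "w \<in> V1 \<Longrightarrow> bmv M w"
  using sp cc unfolding bmv_def sq_int_def by blast

lemma V1_tan: "w \<in> V1 \<Longrightarrow> x \<in> space M \<Longrightarrow> k x \<bullet> w x = 0"
  using sp cc unfolding tangent_def by blast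

lemma V2_bm: "\<phi> \<in> V2 \<Longrightarrow> bm M \<phi>"
  using sp unfolding bm_def sq_int_def by blast

lemma dvg_V2: "w \<in> V1 \<Longrightarrow> dvg w \<in> V2"
  using sp by auto

lemma perp_V1: "\<gamma> \<in> V0 \<Longrightarrow> perp k (grad \<gamma>) \<in> V1"
  using sp by auto

lemma V2_def0: "\<phi> \<in> V2 \<Longrightarrow> integral\<^sup>L M (\<lambda>x. (\<phi> x)\<^sup>2) = 0 \<Longrightarrow> x \<in> space M \<Longrightarrow> \<phi> x = 0"
  using sp by blast

lemma V0_def0: "\<gamma> \<in> V0 \<Longrightarrow> integral\<^sup>L M (\<lambda>x. (\<gamma> x)\<^sup>2) = 0 \<Longrightarrow> x \<in> space M \<Longrightarrow> \<gamma> x = 0"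
  using sp by blast

lemma f_bm: "bm M f" using f_Linf unfolding bm_def by auto

lemma udot_V1: "udot t \<in> V1"
  unfolding udot_def using B1 findims by (intro findim_lincomb) auto

lemma Ddot_V2: "Ddot t \<in> V2"
  unfolding Ddot_def using B2 findims by (intro findim_lincomb) auto

lemma F_V1: "t \<in> I \<Longrightarrow> F t \<in> V1" using F_def by auto

lemma PD_ucomp: assumes t: "t \<in> I" shows "PD M I t (\<lambda>s x. u s x $ l) (\<lambda>x. udot t x $ l)"
proof -
  have "PD M I t (\<lambda>s x. \<Sum>\<beta>\<in>B1. c \<beta> s * (\<beta> x $ l)) (\<lambda>x. \<Sum>\<beta>\<in>B1. c' \<beta> t * (\<beta> x $ l))"
    using B1 t by (intro PD_sum PD_coef bm_comp V1_bmv) auto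
  then show ?thesis
    by (rule PD_cong) (use B1 in \<open>auto simp: udot_def\<close>)
qed

lemma PD_D: assumes t: "t \<in> I" shows "PD M I t D (Ddot t)"
proof -
  have "PD M I t (\<lambda>s x. \<Sum>\<beta>\<in>B2. d \<beta> s * \<beta> x) (\<lambda>x. \<Sum>\<beta>\<in>B2. d' \<beta> t * \<beta> x)"
    using B2 t by (intro PD_sum PD_coef V2_bm) auto
  then show ?thesis
    by (rule PD_cong) (use B2 in \<open>auto simp: Ddot_def\<close>)
qed

lemma PD_wu: assumes t: "t \<in> I" and w: "bmv M w"
  shows "PD M I t (\<lambda>s x. w x \<bullet> u s x) (\<lambda>x. w x \<bullet> udot t x)"
proof -
  have "PD M I t (\<lambda>s x. \<Sum>l\<in>UNIV. w x $ l * u s x $ l) (\<lambda>x. \<Sum>l\<in>UNIV. 0 * u t x $ l + w x $ l * udot t x $ l)"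
    using t w by (intro PD_sum PD_mult PD_const bm_comp PD_ucomp) auto
  then show ?thesis
    by (rule PD_cong) (auto simp: inner_vec_def)
qed

lemma PD_uu: assumes t: "t \<in> I"
  shows "PD M I t (\<lambda>s x. u s x \<bullet> u s x) (\<lambda>x. 2 * (u t x \<bullet> udot t x))"
proof -
  have "PD M I t (\<lambda>s x. \<Sum>l\<in>UNIV. u s x $ l * u s x $ l) (\<lambda>x. \<Sum>l\<in>UNIV. udot t x $ l * u t x $ l + u t x $ l * udot t x $ l)"
    using t by (intro PD_sum PD_mult PD_ucomp) auto
  then show ?thesis
    by (rule PD_cong) (auto simp: inner_vec_def sum_distrib_left algebra_simps sum.distrib)
qed

lemma nn: "norm v * norm v = v \<bullet> v" for v :: "real^3"
  by (simp add: power2_norm_eq_inner[symmetric] power2_eq_square)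

lemma PD_energy: assumes t: "t \<in> I"
  shows "PD M I t (\<lambda>s x. D s x * (norm (u s x))\<^sup>2 / 2 + g * ((D s x)\<^sup>2 / 2 + b x * D s x))
     (\<lambda>x. Ddot t x * ((norm (u t x))\<^sup>2 / 2 + g * D t x + g * b x) + D t x * (u t x \<bullet> udot t x))"
proof -
  have A: "PD M I t (\<lambda>s x. D s x * (u s x \<bullet> u s x)) (\<lambda>x. Ddot t x * (u t x \<bullet> u t x) + D t x * (2 * (u t x \<bullet> udot t x)))"
    using t by (intro PD_mult PD_D PD_uu)
  have B: "PD M I t (\<lambda>s x. D s x * D s x) (\<lambda>x. Ddot t x * D t x + D t x * Ddot t x)"
    using t by (intro PD_mult PD_D)
  have C: "PD M I t (\<lambda>s x. b x * D s x) (\<lambda>x. 0 * D t x + b x * Ddot t x)"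
    using t b_V2 by (intro PD_mult PD_D PD_const V2_bm)
  have "PD M I t (\<lambda>s x. (1/2) * (D s x * (u s x \<bullet> u s x)) + ((g/2) * (D s x * D s x) + g * (b x * D s x)))
     (\<lambda>x. (0 * (D t x * (u t x \<bullet> u t x)) + (1/2) * (Ddot t x * (u t x \<bullet> u t x) + D t x * (2 * (u t x \<bullet> udot t x))))
        + ((0 * (D t x * D t x) + (g/2) * (Ddot t x * D t x + D t x * Ddot t x)) + (0 * (b x * D t x) + g * (0 * D t x + b x * Ddot t x))))"
    using t by (intro PD_add PD_mult PD_const A B C bm_const)
  then show ?thesis
    by (rule PD_cong) (auto simp: nn power2_eq_square algebra_simps)
qed

lemma deriv_unique: "t \<in> I \<Longrightarrow> (f1 has_real_derivative a) (at t within I) \<Longrightarrow> (f1 has_real_derivative a') (at t within I) \<Longrightarrow> a = a'"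
  using has_field_derivative_unique nontriv by blast

lemma Ddot_eq: assumes t: "t \<in> I" and x: "x \<in> space M" shows "Ddot t x = - dvg (F t) x"
proof -
  define \<phi> where "\<phi> = (\<lambda>x. Ddot t x + dvg (F t) x)"
  have \<phi>V2: "\<phi> \<in> V2" unfolding \<phi>_def using findims Ddot_V2 dvg_V2 F_V1 t
    by (intro findim_add) auto
  have "((\<lambda>s. integral\<^sup>L M (\<lambda>x. \<phi> x * D s x)) has_real_derivative (\<integral>x. 0 * D t x + \<phi> x * Ddot t x \<partial>M)) (at t within I)"
    using t \<phi>V2 by (intro PD_deriv fm PD_mult PD_const PD_D V2_bm)
  then have e: "(\<integral>x. 0 * D t x + \<phi> x * Ddot t x \<partial>M) = - integral\<^sup>L M (\<lambda>x. \<phi> x * dvg (F t) x)"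
    using cont t \<phi>V2 deriv_unique by blast
  have i1: "integrable M (\<lambda>x. \<phi> x * Ddot t x)" "integrable M (\<lambda>x. \<phi> x * dvg (F t) x)"
    using bm_integrable[OF fm bm_mult[OF V2_bm[OF \<phi>V2] V2_bm[OF Ddot_V2]]]
      bm_integrable[OF fm bm_mult[OF V2_bm[OF \<phi>V2] V2_bm[OF dvg_V2[OF F_V1[OF t]]]]] by auto
  have "integral\<^sup>L M (\<lambda>x. (\<phi> x)\<^sup>2) = (\<integral>x. \<phi> x * Ddot t x + \<phi> x * dvg (F t) x \<partial>M)"
    unfolding \<phi>_def by (simp add: power2_eq_square algebra_simps)
  also have "\<dots> = 0" using e i1 by simp
  finally have "\<phi> x = 0" using V2_def0 \<phi>V2 x by blast
  then show ?thesis unfolding \<phi>_def by simp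
qed

lemma udot_eq: assumes t: "t \<in> I" and w: "w \<in> V1"
  shows "(\<integral>x. w x \<bullet> udot t x \<partial>M) = - integral\<^sup>L M (\<lambda>x. w x \<bullet> perp k (Q t) x)
                   + integral\<^sup>L M (\<lambda>x. dvg w x * (g * (D t x + b x) + (norm (u t x))\<^sup>2 / 2))"
proof -
  have "((\<lambda>s. integral\<^sup>L M (\<lambda>x. w x \<bullet> u s x)) has_real_derivative (\<integral>x. w x \<bullet> udot t x \<partial>M)) (at t within I)"
    using t w by (intro PD_deriv fm PD_wu V1_bmv)
  then show ?thesis using mom t w deriv_unique by blast
qed

lemma energy_deriv:
  assumes q': "\<forall>t\<in>I. Q t = (\<lambda>x. q' t x *\<^sub>R F t x)" and t: "t \<in> I"
  shows "((\<lambda>s. energy M g b (u s) (D s)) has_real_derivative 0) (at t within I)"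
proof -
  let ?\<Phi> = "\<lambda>x. (norm (u t x))\<^sup>2 / 2 + g * D t x + g * b x"
  have d: "((\<lambda>s. energy M g b (u s) (D s)) has_real_derivative
     (\<integral>x. Ddot t x * ?\<Phi> x + D t x * (u t x \<bullet> udot t x) \<partial>M)) (at t within I)"
    unfolding energy_def using t by (intro PD_deriv fm PD_energy)
  have bmu: "bmv M (u t)" "bmv M (udot t)" using u_V1 t udot_V1 V1_bmv by auto
  have bmD: "bm M (D t)" "bm M b" "bm M (Ddot t)" using D_V2 t b_V2 Ddot_V2 V2_bm by auto
  have bmP: "bm M ?\<Phi>"
  proof -
    have "bm M (\<lambda>x. (u t x \<bullet> u t x) * (1/2) + g * D t x + g * b x)"
      using bmu bmD by (intro bm_add bm_mult bm_inner bm_const)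
    then show ?thesis by (rule bm_cong) (simp add: power2_norm_eq_inner)
  qed
  have i1: "integrable M (\<lambda>x. Ddot t x * ?\<Phi> x)" "integrable M (\<lambda>x. D t x * (u t x \<bullet> udot t x))"
    using bmu bmD bmP by (auto intro!: bm_integrable fm bm_mult bm_inner)
  have FV: "F t \<in> V1" using F_V1 t .
  have e1: "(\<integral>x. Ddot t x * ?\<Phi> x \<partial>M) = - (\<integral>x. dvg (F t) x * ?\<Phi> x \<partial>M)"
  proof -
    have "(\<integral>x. Ddot t x * ?\<Phi> x \<partial>M) = (\<integral>x. - (dvg (F t) x * ?\<Phi> x) \<partial>M)"
      using t by (intro Bochner_Integration.integral_cong) (auto simp: Ddot_eq)
    then show ?thesis by simp
  qed
  have e2: "(\<integral>x. D t x * (u t x \<bullet> udot t x) \<partial>M) = (\<integral>x. udot t x \<bullet> (D t x *\<^sub>R u t x) \<partial>M)"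
    by (intro Bochner_Integration.integral_cong) (auto simp: inner_commute)
  also have "\<dots> = (\<integral>x. udot t x \<bullet> F t x \<partial>M)"
    using F_def t udot_V1 by simp
  also have "\<dots> = (\<integral>x. F t x \<bullet> udot t x \<partial>M)"
    by (simp add: inner_commute)
  also have "\<dots> = - integral\<^sup>L M (\<lambda>x. F t x \<bullet> perp k (Q t) x)
                   + integral\<^sup>L M (\<lambda>x. dvg (F t) x * (g * (D t x + b x) + (norm (u t x))\<^sup>2 / 2))"
    using udot_eq t FV by blast
  also have "integral\<^sup>L M (\<lambda>x. F t x \<bullet> perp k (Q t) x) = 0"
  proof -
    have "\<And>x. F t x \<bullet> perp k (Q t) x = 0"
      using q' t by (simp add: perp_def cross_mult_right dot_cross_self)
    then show ?thesis by simp
  qed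
  also have "integral\<^sup>L M (\<lambda>x. dvg (F t) x * (g * (D t x + b x) + (norm (u t x))\<^sup>2 / 2)) = (\<integral>x. dvg (F t) x * ?\<Phi> x \<partial>M)"
    by (intro Bochner_Integration.integral_cong) (auto simp: algebra_simps)
  finally have e3: "(\<integral>x. D t x * (u t x \<bullet> udot t x) \<partial>M) = (\<integral>x. dvg (F t) x * ?\<Phi> x \<partial>M)" by simp
  have "(\<integral>x. Ddot t x * ?\<Phi> x + D t x * (u t x \<bullet> udot t x) \<partial>M) = 0"
    using i1 e1 e3 by simp
  then show ?thesis using d by simp
qed

end


lemma det_tendsto:
  fixes A :: "'b \<Rightarrow> real mat"
  assumes A: "\<And>s. A s \<in> carrier_mat n n" and A0: "A0 \<in> carrier_mat n n"
    and lim: "\<And>i j. i < n \<Longrightarrow> j < n \<Longrightarrow> ((\<lambda>s. A s $$ (i,j)) \<longlongrightarrow> A0 $$ (i,j)) F"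
  shows "((\<lambda>s. Determinant.det (A s)) \<longlongrightarrow> Determinant.det A0) F"
proof -
  have "((\<lambda>s. (\<Sum>p | p permutes {0..<n}. of_int (sign p) * (\<Prod>i = 0..<n. A s $$ (i, p i))))
     \<longlongrightarrow> (\<Sum>p | p permutes {0..<n}. of_int (sign p) * (\<Prod>i = 0..<n. A0 $$ (i, p i)))) F"
  proof (intro tendsto_sum tendsto_mult tendsto_const tendsto_prod)
    fix p i assume "p \<in> {p. p permutes {0..<n}}" "i \<in> {0..<n}"
    then have "p i < n" "i < n" using permutes_in_image by fastforce+
    then show "((\<lambda>s. A s $$ (i, p i)) \<longlongrightarrow> A0 $$ (i, p i)) F" by (rule lim[rotated])
  qed
  then show ?thesis using det_def'[OF A] det_def'[OF A0] by simp
qed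

lemma min_basis:
  fixes B0 :: "('p \<Rightarrow> real) set"
  assumes fin: "finite B0" and sp: "\<forall>\<gamma>\<in>V. \<exists>y. \<forall>x\<in>S. \<gamma> x = (\<Sum>\<beta>\<in>B0. y \<beta> * \<beta> x)"
  shows "\<exists>B \<subseteq> B0. (\<forall>\<gamma>\<in>V. \<exists>y. \<forall>x\<in>S. \<gamma> x = (\<Sum>\<beta>\<in>B. y \<beta> * \<beta> x)) \<and>
     (\<forall>y. (\<forall>x\<in>S. (\<Sum>\<beta>\<in>B. y \<beta> * \<beta> x) = 0) \<longrightarrow> (\<forall>\<beta>\<in>B. y \<beta> = 0))"
proof -
  define P where "P B \<longleftrightarrow> B \<subseteq> B0 \<and> (\<forall>\<gamma>\<in>V. \<exists>y. \<forall>x\<in>S. \<gamma> x = (\<Sum>\<beta>\<in>B. y \<beta> * \<beta> x))" for B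
  have "P B0" using sp unfolding P_def by auto
  then obtain B where PB: "P B" and minB: "\<forall>B'. P B' \<longrightarrow> card B \<le> card B'"
    using ex_has_least_nat[of P B0 card] by blast
  have finB: "finite B" using PB fin unfolding P_def by (auto intro: finite_subset)
  have indep: "\<forall>\<beta>\<in>B. y \<beta> = 0" if y: "\<forall>x\<in>S. (\<Sum>\<beta>\<in>B. y \<beta> * \<beta> x) = 0" for y
  proof (rule ccontr)
    assume "\<not> (\<forall>\<beta>\<in>B. y \<beta> = 0)"
    then obtain \<beta>0 where b0: "\<beta>0 \<in> B" "y \<beta>0 \<noteq> 0" by auto
    define B' where "B' = B - {\<beta>0}"
    have split: "(\<Sum>\<beta>\<in>B. h \<beta>) = h \<beta>0 + (\<Sum>\<beta>\<in>B'. h \<beta>)" for h :: "('p \<Rightarrow> real) \<Rightarrow> real"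
      unfolding B'_def using finB b0 by (simp add: sum.remove)
    have b0x: "\<beta>0 x = (\<Sum>\<beta>\<in>B'. (- y \<beta> / y \<beta>0) * \<beta> x)" if "x \<in> S" for x
    proof -
      have "y \<beta>0 * \<beta>0 x + (\<Sum>\<beta>\<in>B'. y \<beta> * \<beta> x) = 0" using y that split[of "\<lambda>\<beta>. y \<beta> * \<beta> x"] by simp
      then have "\<beta>0 x = - (\<Sum>\<beta>\<in>B'. y \<beta> * \<beta> x) / y \<beta>0" using b0 by (simp add: field_simps)
      also have "\<dots> = (\<Sum>\<beta>\<in>B'. (- y \<beta> / y \<beta>0) * \<beta> x)"
        by (simp add: sum_divide_distrib sum_negf[symmetric])
      finally show ?thesis .
    qed
    have "P B'"
      unfolding P_def
    proof (intro conjI ballI)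
      show "B' \<subseteq> B0" using PB unfolding P_def B'_def by auto
      fix \<gamma> assume "\<gamma> \<in> V"
      then obtain z where z: "\<forall>x\<in>S. \<gamma> x = (\<Sum>\<beta>\<in>B. z \<beta> * \<beta> x)" using PB unfolding P_def by blast
      show "\<exists>y. \<forall>x\<in>S. \<gamma> x = (\<Sum>\<beta>\<in>B'. y \<beta> * \<beta> x)"
      proof (intro exI[of _ "\<lambda>\<beta>. z \<beta> + z \<beta>0 * (- y \<beta> / y \<beta>0)"] ballI)
        fix x assume x: "x \<in> S"
        have "\<gamma> x = z \<beta>0 * \<beta>0 x + (\<Sum>\<beta>\<in>B'. z \<beta> * \<beta> x)" using z x split[of "\<lambda>\<beta>. z \<beta> * \<beta> x"] by simp
        also have "\<dots> = z \<beta>0 * (\<Sum>\<beta>\<in>B'. (- y \<beta> / y \<beta>0) * \<beta> x) + (\<Sum>\<beta>\<in>B'. z \<beta> * \<beta> x)"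
          using b0x[OF x] by simp
        also have "\<dots> = (\<Sum>\<beta>\<in>B'. z \<beta>0 * ((- y \<beta> / y \<beta>0) * \<beta> x) + z \<beta> * \<beta> x)"
          by (simp only: sum.distrib sum_distrib_left)
        also have "\<dots> = (\<Sum>\<beta>\<in>B'. (z \<beta> + z \<beta>0 * (- y \<beta> / y \<beta>0)) * \<beta> x)"
          by (rule sum.cong) (auto simp: algebra_simps)
        finally show "\<gamma> x = (\<Sum>\<beta>\<in>B'. (z \<beta> + z \<beta>0 * (- y \<beta> / y \<beta>0)) * \<beta> x)" .
      qed
    qed
    moreover have "card B' < card B" unfolding B'_def using finB b0 by (meson card_Diff1_less)
    ultimately show False using minB by fastforce
  qed
  show ?thesis using PB indep unfolding P_def by blast
qed

lemma list_basis:
  fixes B :: "('p \<Rightarrow> real) set"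
  assumes fin: "finite B"
    and sp: "\<forall>\<gamma>\<in>V. \<exists>y. \<forall>x\<in>S. \<gamma> x = (\<Sum>\<beta>\<in>B. y \<beta> * \<beta> x)"
    and ind: "\<forall>y. (\<forall>x\<in>S. (\<Sum>\<beta>\<in>B. y \<beta> * \<beta> x) = 0) \<longrightarrow> (\<forall>\<beta>\<in>B. y \<beta> = 0)"
  shows "\<exists>bs. set bs = B \<and> (\<forall>\<gamma>\<in>V. \<exists>y. \<forall>x\<in>S. \<gamma> x = (\<Sum>i<length bs. y i * (bs ! i) x)) \<and>
     (\<forall>y. (\<forall>x\<in>S. (\<Sum>i<length bs. y i * (bs ! i) x) = 0) \<longrightarrow> (\<forall>i<length bs. y i = 0))"
proof -
  obtain bs where bs: "set bs = B" "distinct bs" using finite_distinct_list[OF fin] by auto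
  have bij: "bij_betw ((!) bs) {..<length bs} B" using bs by (intro bij_betw_nth) auto
  have conv: "(\<Sum>\<beta>\<in>B. h \<beta>) = (\<Sum>i<length bs. h (bs ! i))" for h :: "('p \<Rightarrow> real) \<Rightarrow> real"
    using sum.reindex_bij_betw[OF bij, of h] by simp
  show ?thesis
  proof (intro exI[of _ bs] conjI allI impI ballI)
    show "set bs = B" by (fact bs(1))
  next
    fix \<gamma> assume "\<gamma> \<in> V"
    then obtain y where "\<forall>x\<in>S. \<gamma> x = (\<Sum>\<beta>\<in>B. y \<beta> * \<beta> x)" using sp by auto
    then show "\<exists>y. \<forall>x\<in>S. \<gamma> x = (\<Sum>i<length bs. y i * (bs ! i) x)"
      by (intro exI[of _ "\<lambda>i. y (bs ! i)"]) (simp add: conv)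
  next
    fix y i assume y: "\<forall>x\<in>S. (\<Sum>i<length bs. y i * (bs ! i) x) = 0" and i: "i < length bs"
    define y' where "y' = y \<circ> the_inv_into {..<length bs} ((!) bs)"
    have y'i: "y' (bs ! j) = y j" if "j < length bs" for j
      unfolding y'_def using bij that by (simp add: bij_betw_def the_inv_into_f_f)
    have "\<forall>x\<in>S. (\<Sum>\<beta>\<in>B. y' \<beta> * \<beta> x) = 0" using y by (simp add: conv y'i)
    then have "\<forall>\<beta>\<in>B. y' \<beta> = 0" using ind by blast
    then show "y i = 0" using i bs y'i[OF i] by auto
  qed
qed



lemma bm_diff: "bm M f \<Longrightarrow> bm M g \<Longrightarrow> bm M (\<lambda>x. f x - g x)"
proof -
  assume "bm M f" "bm M g"
  then have "bm M (\<lambda>x. f x + (-1) * g x)" by (intro bm_add bm_mult bm_const)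
  then show ?thesis by (rule bm_cong) simp
qed

lemma findim_zero: "findim V \<Longrightarrow> (\<lambda>x. 0) \<in> V"
  unfolding findim_def using fin_span_zero by blast

lemma findim_lincomb_idx:
  fixes n :: nat
  shows "findim V \<Longrightarrow> (\<And>i. i < n \<Longrightarrow> h i \<in> V) \<Longrightarrow> (\<lambda>x. \<Sum>i<n. a i *\<^sub>R h i x) \<in> V"
proof (induction n)
  case 0 then show ?case by (simp add: findim_zero)
next
  case (Suc n)
  then have "(\<lambda>x. (\<Sum>i<n. a i *\<^sub>R h i x) + a n *\<^sub>R h n x) \<in> V"
    by (intro findim_add findim_scale) auto
  then show ?case by simp
qed

context sw begin

lemma bmI: "bm M h \<Longrightarrow> integrable M h" using bm_integrable[OF fm] .

lemma enstrophy_deriv: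
  assumes zq: "\<forall>t\<in>I. is_disc_vorticity M k grad V0 (u t) (\<zeta> t) \<and> is_disc_pv M V0 f (D t) (\<zeta> t) (q t) \<and>
                    Q t = (\<lambda>x. q t x *\<^sub>R F t x)"
    and t: "t \<in> I"
  shows "((\<lambda>s. enstrophy M (q s) (D s)) has_real_derivative 0) (at t within I)"
proof -
  have qV0: "q s \<in> V0" "\<zeta> s \<in> V0" if "s \<in> I" for s
    using zq that unfolding is_disc_vorticity_def is_disc_pv_def by auto
  have vort: "(\<integral>x. \<gamma> x * \<zeta> s x \<partial>M) = - (\<integral>x. perp k (grad \<gamma>) x \<bullet> u s x \<partial>M)" if "s \<in> I" "\<gamma> \<in> V0" for s \<gamma>
    using zq that unfolding is_disc_vorticity_def by auto
  have pv: "(\<integral>x. \<gamma> x * q s x * D s x \<partial>M) = (\<integral>x. \<gamma> x * (\<zeta> s x + f x) \<partial>M)" if "s \<in> I" "\<gamma> \<in> V0" for s \<gamma>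
    using zq that unfolding is_disc_pv_def by auto
  have Qt: "Q t = (\<lambda>x. q t x *\<^sub>R F t x)" using zq t by auto
  define qt where "qt = q t"
  have qtV0: "qt \<in> V0" unfolding qt_def using qV0 t by auto
  define w where "w = perp k (grad qt)"
  have wV1: "w \<in> V1" unfolding w_def using perp_V1 qtV0 .
  have bmq: "bm M (q s)" "bm M (\<zeta> s)" "bm M (D s)" if "s \<in> I" for s
    using qV0[OF that] V0_bm D_V2 that V2_bm by auto
  have bmqt: "bm M qt" using V0_bm qtV0 .
  have bmu: "bmv M (u s)" if "s \<in> I" for s using u_V1 that V1_bmv by auto
  have bmw: "bmv M w" using V1_bmv wV1 .
  define R where "R s = -2 * (\<integral>x. w x \<bullet> u s x \<partial>M) + 2 * (\<integral>x. qt x * f x \<partial>M) - (\<integral>x. qt x * qt x * D s x \<partial>M)" for s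
  define e where "e s = (\<integral>x. (qt x - q s x)\<^sup>2 * D s x \<partial>M)" for s
  have Z: "enstrophy M (q s) (D s) = R s + e s" if s: "s \<in> I" for s
  proof -
    have i: "integrable M (\<lambda>x. qt x * qt x * D s x)" "integrable M (\<lambda>x. qt x * q s x * D s x)"
      "integrable M (\<lambda>x. q s x * q s x * D s x)" "integrable M (\<lambda>x. qt x * \<zeta> s x)" "integrable M (\<lambda>x. qt x * f x)"
      using bmq[OF s] bmqt f_bm by (auto intro!: bmI bm_mult)
    have "e s = (\<integral>x. qt x * qt x * D s x - 2 * (qt x * q s x * D s x) + q s x * q s x * D s x \<partial>M)"
      unfolding e_def by (intro arg_cong[where f="integral\<^sup>L M"] ext) (simp add: power2_eq_square algebra_simps)
    also have "\<dots> = (\<integral>x. qt x * qt x * D s x \<partial>M) - 2 * (\<integral>x. qt x * q s x * D s x \<partial>M) + (\<integral>x. q s x * q s x * D s x \<partial>M)"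
      using i by simp
    finally have e1: "e s = \<dots>" .
    have "(\<integral>x. qt x * q s x * D s x \<partial>M) = (\<integral>x. qt x * (\<zeta> s x + f x) \<partial>M)" using pv s qtV0 by auto
    also have "\<dots> = (\<integral>x. qt x * \<zeta> s x \<partial>M) + (\<integral>x. qt x * f x \<partial>M)"
      using i by (simp add: distrib_left)
    also have "(\<integral>x. qt x * \<zeta> s x \<partial>M) = - (\<integral>x. w x \<bullet> u s x \<partial>M)" unfolding w_def using vort s qtV0 by auto
    finally have e2: "(\<integral>x. qt x * q s x * D s x \<partial>M) = - (\<integral>x. w x \<bullet> u s x \<partial>M) + (\<integral>x. qt x * f x \<partial>M)" .
    have "enstrophy M (q s) (D s) = (\<integral>x. q s x * q s x * D s x \<partial>M)"
      unfolding enstrophy_def by (simp add: power2_eq_square)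
    then show ?thesis unfolding R_def using e1 e2 by simp
  qed

  have dR: "(R has_real_derivative 0) (at t within I)"
  proof -
    have d1: "((\<lambda>s. \<integral>x. w x \<bullet> u s x \<partial>M) has_real_derivative (\<integral>x. w x \<bullet> udot t x \<partial>M)) (at t within I)"
      using t bmw by (intro PD_deriv fm PD_wu)
    have d2: "((\<lambda>s. \<integral>x. qt x * qt x * D s x \<partial>M) has_real_derivative (\<integral>x. 0 * D t x + qt x * qt x * Ddot t x \<partial>M)) (at t within I)"
      using t bmqt by (intro PD_deriv fm PD_mult PD_const PD_D bm_mult)
    have dd: "(R has_real_derivative (-2 * (\<integral>x. w x \<bullet> udot t x \<partial>M) + 0 - (\<integral>x. 0 * D t x + qt x * qt x * Ddot t x \<partial>M))) (at t within I)"
      unfolding R_def by (intro DERIV_diff DERIV_add DERIV_cmult DERIV_const d1 d2)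
    define Y where "Y = (\<integral>x. qt x * (grad qt x \<bullet> F t x) \<partial>M)"
    have FV: "F t \<in> V1" using F_V1 t .
    have qtH: "qt \<in> Hone" using V0_Hone qtV0 .
    have tang: "k x \<bullet> grad qt x = 0" if "x \<in> space M" for x
      using cc(1) qtH that unfolding tangent_def by blast
    have X1: "(\<integral>x. w x \<bullet> udot t x \<partial>M) = - Y"
    proof -
      have a: "(\<integral>x. w x \<bullet> udot t x \<partial>M) = - integral\<^sup>L M (\<lambda>x. w x \<bullet> perp k (Q t) x)
                   + integral\<^sup>L M (\<lambda>x. dvg w x * (g * (D t x + b x) + (norm (u t x))\<^sup>2 / 2))"
        using udot_eq t wV1 by blast
      have b0: "integral\<^sup>L M (\<lambda>x. dvg w x * (g * (D t x + b x) + (norm (u t x))\<^sup>2 / 2)) = 0"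
      proof -
        have "integral\<^sup>L M (\<lambda>x. dvg w x * (g * (D t x + b x) + (norm (u t x))\<^sup>2 / 2)) = (\<integral>x. 0 \<partial>M)"
          using cc(5) qtH unfolding w_def by (intro Bochner_Integration.integral_cong) auto
        then show ?thesis by simp
      qed
      have c0: "integral\<^sup>L M (\<lambda>x. w x \<bullet> perp k (Q t) x) = Y"
        unfolding Y_def
      proof (intro Bochner_Integration.integral_cong refl)
        fix x assume x: "x \<in> space M"
        have "w x \<bullet> perp k (Q t) x = qt x * (cross3 (k x) (grad qt x) \<bullet> cross3 (k x) (F t x))"
          unfolding w_def perp_def Qt qt_def by (simp add: cross_mult_right)
        also have "\<dots> = qt x * (grad qt x \<bullet> F t x)"
          using cross_cross_inner[OF k1[OF x] tang[OF x] V1_tan[OF FV x]] by simp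
        finally show "w x \<bullet> perp k (Q t) x = qt x * (grad qt x \<bullet> F t x)" .
      qed
      show ?thesis using a b0 c0 by simp
    qed
    have X2: "(\<integral>x. 0 * D t x + qt x * qt x * Ddot t x \<partial>M) = 2 * Y"
    proof -
      have bq: "bounded_on M qt" using V0_bounded qtV0 .
      have qq: "(\<lambda>x. qt x * qt x) \<in> Hone"
        "\<forall>x\<in>space M. grad (\<lambda>x. qt x * qt x) x = qt x *\<^sub>R grad qt x + qt x *\<^sub>R grad qt x"
        using cc(3) qtH bq by blast+
      have "(\<integral>x. 0 * D t x + qt x * qt x * Ddot t x \<partial>M) = (\<integral>x. - (qt x * qt x * dvg (F t) x) \<partial>M)"
        using t by (intro Bochner_Integration.integral_cong) (auto simp: Ddot_eq)
      also have "\<dots> = - (\<integral>x. qt x * qt x * dvg (F t) x \<partial>M)" by simp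
      also have "(\<integral>x. qt x * qt x * dvg (F t) x \<partial>M) = - (\<integral>x. grad (\<lambda>x. qt x * qt x) x \<bullet> F t x \<partial>M)"
        using cc(4) qq(1) V1_Hdiv[OF FV] by auto
      also have "(\<integral>x. grad (\<lambda>x. qt x * qt x) x \<bullet> F t x \<partial>M) = (\<integral>x. 2 * (qt x * (grad qt x \<bullet> F t x)) \<partial>M)"
      proof (intro Bochner_Integration.integral_cong refl)
        fix x assume x: "x \<in> space M"
        have eq: "grad (\<lambda>x. qt x * qt x) x = qt x *\<^sub>R grad qt x + qt x *\<^sub>R grad qt x" using qq(2) x by blast
        show "grad (\<lambda>x. qt x * qt x) x \<bullet> F t x = 2 * (qt x * (grad qt x \<bullet> F t x))"
          by (simp only: eq inner_add_left inner_scaleR_left)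
      qed
      also have "\<dots> = 2 * Y" unfolding Y_def by simp
      finally show ?thesis by simp
    qed
    show ?thesis using dd X1 X2 by simp
  qed

  obtain B0 where B0: "finite B0" "B0 \<subseteq> V0" "V0 = fin_span B0" using findims(1) unfolding findim_def by auto
  have sp0: "\<forall>\<gamma>\<in>V0. \<exists>y. \<forall>x\<in>space M. \<gamma> x = (\<Sum>\<beta>\<in>B0. y \<beta> * \<beta> x)"
    using B0(3) unfolding fin_span_def by auto
  obtain B where B: "B \<subseteq> B0" "\<forall>\<gamma>\<in>V0. \<exists>y. \<forall>x\<in>space M. \<gamma> x = (\<Sum>\<beta>\<in>B. y \<beta> * \<beta> x)"
     "\<forall>y. (\<forall>x\<in>space M. (\<Sum>\<beta>\<in>B. y \<beta> * \<beta> x) = 0) \<longrightarrow> (\<forall>\<beta>\<in>B. y \<beta> = 0)"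
    using min_basis[OF B0(1) sp0] by blast
  have finB: "finite B" using B(1) B0(1) finite_subset by auto
  obtain bs where bs: "set bs = B" "\<forall>\<gamma>\<in>V0. \<exists>y. \<forall>x\<in>space M. \<gamma> x = (\<Sum>i<length bs. y i * (bs ! i) x)"
     "\<forall>y. (\<forall>x\<in>space M. (\<Sum>i<length bs. y i * (bs ! i) x) = 0) \<longrightarrow> (\<forall>i<length bs. y i = 0)"
    using list_basis[OF finB B(2) B(3)] by blast
  define n where "n = length bs"
  have bV0: "bs ! i \<in> V0" if "i < n" for i using bs(1) B(1) B0(2) that nth_mem unfolding n_def by blast
  have bbm: "bm M (bs ! i)" if "i < n" for i using bV0[OF that] V0_bm by auto
  define A where "A s = mat n n (\<lambda>(i,j). \<integral>x. (bs ! i) x * (bs ! j) x * D s x \<partial>M)" for s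
  define wi where "wi i = perp k (grad (bs ! i))" for i
  define Lf where "Lf i s = - (\<integral>x. wi i x \<bullet> u s x \<partial>M) + (\<integral>x. wi i x \<bullet> u t x \<partial>M)
      - (\<integral>x. (bs ! i) x * qt x * D s x \<partial>M) + (\<integral>x. (bs ! i) x * qt x * D t x \<partial>M)" for i s
  define Lv where "Lv s = vec n (\<lambda>i. Lf i s)" for s
  define ys where "ys s = (SOME y. \<forall>x\<in>space M. q s x - qt x = (\<Sum>i<n. y i * (bs ! i) x))" for s
  have Acar: "A s \<in> carrier_mat n n" for s unfolding A_def by simp
  have dimA: "dim_row (A s) = n" "dim_col (A s) = n" for s unfolding A_def by simp_all
  have Aij: "A s $$ (i,j) = (\<integral>x. (bs ! i) x * (bs ! j) x * D s x \<partial>M)" if "i < n" "j < n" for s i j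
    unfolding A_def using that by simp
  have ysp: "\<forall>x\<in>space M. q s x - qt x = (\<Sum>i<n. ys s i * (bs ! i) x)" if s: "s \<in> I" for s
  proof -
    have "(\<lambda>x. q s x + (-1) *\<^sub>R qt x) \<in> V0" using findims qV0[OF s] qtV0 by (intro findim_add findim_scale) auto
    then have "\<exists>y. \<forall>x\<in>space M. q s x - qt x = (\<Sum>i<n. y i * (bs ! i) x)" using bs(2) unfolding n_def by auto
    then show ?thesis unfolding ys_def by (rule someI_ex)
  qed
  have K1: "(\<integral>x. (bs ! i) x * (q s x - qt x) * D s x \<partial>M) = Lf i s" if s: "s \<in> I" and i: "i < n" for s i
  proof -
    let ?b = "bs ! i"
    have bi: "?b \<in> V0" using bV0 i .
    have bmb: "bm M ?b" using bbm i .
    have ii: "integrable M (\<lambda>x. ?b x * q s x * D s x)" "integrable M (\<lambda>x. ?b x * qt x * D s x)"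
      "integrable M (\<lambda>x. ?b x * \<zeta> s x)" "integrable M (\<lambda>x. ?b x * f x)" "integrable M (\<lambda>x. ?b x * \<zeta> t x)"
      using bmq[OF s] bmq[OF t] bmb bmqt f_bm by (auto intro!: bmI bm_mult)
    have "(\<integral>x. ?b x * (q s x - qt x) * D s x \<partial>M) = (\<integral>x. ?b x * q s x * D s x - ?b x * qt x * D s x \<partial>M)"
      by (simp add: algebra_simps)
    also have "\<dots> = (\<integral>x. ?b x * q s x * D s x \<partial>M) - (\<integral>x. ?b x * qt x * D s x \<partial>M)" using ii by simp
    finally have a: "(\<integral>x. ?b x * (q s x - qt x) * D s x \<partial>M) = (\<integral>x. ?b x * q s x * D s x \<partial>M) - (\<integral>x. ?b x * qt x * D s x \<partial>M)" .
    have "(\<integral>x. ?b x * q s x * D s x \<partial>M) = (\<integral>x. ?b x * (\<zeta> s x + f x) \<partial>M)" using pv s bi by auto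
    also have "\<dots> = (\<integral>x. ?b x * \<zeta> s x \<partial>M) + (\<integral>x. ?b x * f x \<partial>M)" using ii by (simp add: distrib_left)
    also have "(\<integral>x. ?b x * \<zeta> s x \<partial>M) = - (\<integral>x. wi i x \<bullet> u s x \<partial>M)" unfolding wi_def using vort s bi by auto
    finally have b1: "(\<integral>x. ?b x * q s x * D s x \<partial>M) = - (\<integral>x. wi i x \<bullet> u s x \<partial>M) + (\<integral>x. ?b x * f x \<partial>M)" .
    have "(\<integral>x. ?b x * qt x * D t x \<partial>M) = (\<integral>x. ?b x * (\<zeta> t x + f x) \<partial>M)" using pv t bi unfolding qt_def by auto
    also have "\<dots> = (\<integral>x. ?b x * \<zeta> t x \<partial>M) + (\<integral>x. ?b x * f x \<partial>M)" using ii by (simp add: distrib_left)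
    also have "(\<integral>x. ?b x * \<zeta> t x \<partial>M) = - (\<integral>x. wi i x \<bullet> u t x \<partial>M)" unfolding wi_def using vort t bi by auto
    finally have b2: "(\<integral>x. ?b x * qt x * D t x \<partial>M) = - (\<integral>x. wi i x \<bullet> u t x \<partial>M) + (\<integral>x. ?b x * f x \<partial>M)" .
    show ?thesis using a b1 b2 unfolding Lf_def by simp
  qed
  have K2: "A s *\<^sub>v vec n (ys s) = Lv s" if s: "s \<in> I" for s
  proof (rule eq_vecI)
    show "dim_vec (A s *\<^sub>v vec n (ys s)) = dim_vec (Lv s)" unfolding A_def Lv_def by simp
  next
    fix i assume "i < dim_vec (Lv s)"
    then have i: "i < n" unfolding Lv_def by simp
    have ij: "integrable M (\<lambda>x. (bs ! i) x * (bs ! j) x * D s x * ys s j)" if "j < n" for j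
      using bbm[OF i] bbm[OF that] bmq[OF s] by (intro bmI bm_mult bm_const)
    have "vec_index (A s *\<^sub>v vec n (ys s)) i = (\<Sum>j<n. (\<integral>x. (bs ! i) x * (bs ! j) x * D s x \<partial>M) * ys s j)"
      using i Acar[of s] by (simp add: scalar_prod_def Aij atLeast0LessThan)
    also have "\<dots> = (\<Sum>j<n. (\<integral>x. (bs ! i) x * (bs ! j) x * D s x * ys s j \<partial>M))" by simp
    also have "\<dots> = (\<integral>x. (\<Sum>j<n. (bs ! i) x * (bs ! j) x * D s x * ys s j) \<partial>M)"
      using ij by (intro Bochner_Integration.integral_sum[symmetric]) auto
    also have "\<dots> = (\<integral>x. (bs ! i) x * (q s x - qt x) * D s x \<partial>M)"
    proof (intro Bochner_Integration.integral_cong refl)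
      fix x assume x: "x \<in> space M"
      have "(\<Sum>j<n. (bs ! i) x * (bs ! j) x * D s x * ys s j) = (bs ! i) x * (\<Sum>j<n. ys s j * (bs ! j) x) * D s x"
        by (simp add: sum_distrib_left sum_distrib_right algebra_simps)
      also have "\<dots> = (bs ! i) x * (q s x - qt x) * D s x" using ysp[OF s] x by simp
      finally show "(\<Sum>j<n. (bs ! i) x * (bs ! j) x * D s x * ys s j) = (bs ! i) x * (q s x - qt x) * D s x" .
    qed
    also have "\<dots> = Lf i s" using K1 s i by blast
    also have "\<dots> = vec_index (Lv s) i" unfolding Lv_def using i by simp
    finally show "vec_index (A s *\<^sub>v vec n (ys s)) i = vec_index (Lv s) i" .
  qed
  have K3: "e s = (\<Sum>i<n. ys s i * Lf i s)" if s: "s \<in> I" for s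
  proof -
    have ii: "integrable M (\<lambda>x. ys s i * ((bs ! i) x * (q s x - qt x) * D s x))" if "i < n" for i
      using bbm[OF that] bmq[OF s] bmqt by (intro bmI bm_mult bm_const bm_diff)
    have "e s = (\<integral>x. (\<Sum>i<n. ys s i * ((bs ! i) x * (q s x - qt x) * D s x)) \<partial>M)"
      unfolding e_def
    proof (intro Bochner_Integration.integral_cong refl)
      fix x assume x: "x \<in> space M"
      have "(\<Sum>i<n. ys s i * ((bs ! i) x * (q s x - qt x) * D s x)) = (\<Sum>i<n. ys s i * (bs ! i) x * ((q s x - qt x) * D s x))"
        by (rule sum.cong) (simp_all add: algebra_simps)
      also have "\<dots> = (\<Sum>i<n. ys s i * (bs ! i) x) * ((q s x - qt x) * D s x)" by (simp only: sum_distrib_right)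
      also have "(\<Sum>i<n. ys s i * (bs ! i) x) = q s x - qt x" using ysp[OF s] x by simp
      also have "(q s x - qt x) * ((q s x - qt x) * D s x) = (qt x - q s x)\<^sup>2 * D s x" by (simp add: power2_eq_square algebra_simps)
      finally show "(qt x - q s x)\<^sup>2 * D s x = (\<Sum>i<n. ys s i * ((bs ! i) x * (q s x - qt x) * D s x))" by simp
    qed
    also have "\<dots> = (\<Sum>i<n. (\<integral>x. ys s i * ((bs ! i) x * (q s x - qt x) * D s x) \<partial>M))"
      using ii by (intro Bochner_Integration.integral_sum) auto
    also have "\<dots> = (\<Sum>i<n. ys s i * Lf i s)" using K1 s by simp
    finally show ?thesis .
  qed

  have K4: "Determinant.det (A t) \<noteq> 0"
  proof
    assume "Determinant.det (A t) = 0"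
    then obtain v where v: "v \<in> carrier_vec n" "v \<noteq> 0\<^sub>v n" "A t *\<^sub>v v = 0\<^sub>v n"
      using det_0_iff_vec_prod_zero_field[OF Acar[of t]] by blast
    have dv: "dim_vec v = n" using v(1) by auto
    define \<gamma> where "\<gamma> = (\<lambda>x. \<Sum>j<n. vec_index v j *\<^sub>R (bs ! j) x)"
    have \<gamma>V0: "\<gamma> \<in> V0" unfolding \<gamma>_def using findims(1) bV0 by (intro findim_lincomb_idx) auto
    have bm\<gamma>: "bm M \<gamma>" using V0_bm \<gamma>V0 by auto
    have ij: "integrable M (\<lambda>x. vec_index v i * vec_index v j * ((bs ! i) x * (bs ! j) x * D t x))" if "i < n" "j < n" for i j
      using bbm[OF that(1)] bbm[OF that(2)] bmq[OF t] by (intro bmI bm_mult bm_const)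
    have "0 = (\<Sum>i<n. vec_index v i * vec_index (A t *\<^sub>v v) i)" using v(3) by simp
    also have "\<dots> = (\<Sum>i<n. \<Sum>j<n. vec_index v i * vec_index v j * (\<integral>x. (bs ! i) x * (bs ! j) x * D t x \<partial>M))"
      using Acar[of t] dv by (intro sum.cong refl) (simp add: scalar_prod_def Aij atLeast0LessThan sum_distrib_left algebra_simps)
    also have "\<dots> = (\<Sum>i<n. \<Sum>j<n. (\<integral>x. vec_index v i * vec_index v j * ((bs ! i) x * (bs ! j) x * D t x) \<partial>M))"
      by simp
    also have "\<dots> = (\<Sum>i<n. (\<integral>x. (\<Sum>j<n. vec_index v i * vec_index v j * ((bs ! i) x * (bs ! j) x * D t x)) \<partial>M))"
      by (intro sum.cong refl Bochner_Integration.integral_sum[symmetric]) (use ij in auto)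
    also have "\<dots> = (\<integral>x. (\<Sum>i<n. \<Sum>j<n. vec_index v i * vec_index v j * ((bs ! i) x * (bs ! j) x * D t x)) \<partial>M)"
      by (intro Bochner_Integration.integral_sum[symmetric] Bochner_Integration.integrable_sum) (use ij in auto)
    also have "\<dots> = (\<integral>x. \<gamma> x * \<gamma> x * D t x \<partial>M)"
      unfolding \<gamma>_def by (intro arg_cong[where f="integral\<^sup>L M"] ext)
        (simp add: sum_distrib_left sum_distrib_right algebra_simps)
    finally have z: "(\<integral>x. \<gamma> x * \<gamma> x * D t x \<partial>M) = 0" by simp
    have int: "integrable M (\<lambda>x. \<gamma> x * \<gamma> x * D t x)" using bm\<gamma> bmq[OF t] by (intro bmI bm_mult)
    have nn: "AE x in M. 0 \<le> \<gamma> x * \<gamma> x * D t x"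
      using D_pos t by (intro AE_I2) (metis less_imp_le mult_nonneg_nonneg zero_le_square)
    have "AE x in M. \<gamma> x * \<gamma> x * D t x = 0" using integral_nonneg_eq_0_iff_AE[OF int nn] z by simp
    then have "AE x in M. (\<gamma> x)\<^sup>2 = 0"
      using AE_space by eventually_elim (use D_pos t in \<open>fastforce simp: power2_eq_square\<close>)
    then have "integral\<^sup>L M (\<lambda>x. (\<gamma> x)\<^sup>2) = 0" by (rule integral_eq_zero_AE)
    then have "\<forall>x\<in>space M. \<gamma> x = 0" using V0_def0 \<gamma>V0 by blast
    then have "\<forall>x\<in>space M. (\<Sum>j<length bs. vec_index v j * (bs ! j) x) = 0" unfolding \<gamma>_def n_def by simp
    then have "\<forall>j<n. vec_index v j = 0" using bs(3) unfolding n_def by blast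
    then have "v = 0\<^sub>v n" using dv by (intro eq_vecI) auto
    then show False using v(2) by simp
  qed
  have Acont: "((\<lambda>s. A s $$ (i,j)) \<longlongrightarrow> A t $$ (i,j)) (at t within I)" if "i < n" "j < n" for i j
  proof -
    have "((\<lambda>s. \<integral>x. (bs ! i) x * (bs ! j) x * D s x \<partial>M) has_real_derivative
        (\<integral>x. 0 * D t x + (bs ! i) x * (bs ! j) x * Ddot t x \<partial>M)) (at t within I)"
      using t bbm that by (intro PD_deriv fm PD_mult PD_const PD_D bm_mult)
    then have "continuous (at t within I) (\<lambda>s. \<integral>x. (bs ! i) x * (bs ! j) x * D s x \<partial>M)"
      by (rule DERIV_continuous)
    then show ?thesis using that by (simp add: Aij continuous_within)
  qed
  have Lder: "\<exists>L'. (Lf i has_real_derivative L') (at t within I)" if "i < n" for i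
  proof -
    have wbm: "bmv M (wi i)" unfolding wi_def using V1_bmv perp_V1 bV0 that by auto
    have d1: "((\<lambda>s. \<integral>x. wi i x \<bullet> u s x \<partial>M) has_real_derivative (\<integral>x. wi i x \<bullet> udot t x \<partial>M)) (at t within I)"
      using t wbm by (intro PD_deriv fm PD_wu)
    have d2: "((\<lambda>s. \<integral>x. (bs ! i) x * qt x * D s x \<partial>M) has_real_derivative (\<integral>x. 0 * D t x + (bs ! i) x * qt x * Ddot t x \<partial>M)) (at t within I)"
      using t bmqt bbm that by (intro PD_deriv fm PD_mult PD_const PD_D bm_mult)
    have "(Lf i has_real_derivative (- (\<integral>x. wi i x \<bullet> udot t x \<partial>M) + 0 - (\<integral>x. 0 * D t x + (bs ! i) x * qt x * Ddot t x \<partial>M) + 0)) (at t within I)"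
      unfolding Lf_def by (intro DERIV_add DERIV_diff DERIV_minus DERIV_const d1 d2)
    then show ?thesis by blast
  qed
  have Lt: "Lf i t = 0" for i unfolding Lf_def by simp
  have Lcont: "((\<lambda>s. Lf i s) \<longlongrightarrow> 0) (at t within I)" if i: "i < n" for i
  proof -
    obtain L' where "(Lf i has_real_derivative L') (at t within I)" using Lder[OF i] by blast
    then have "continuous (at t within I) (Lf i)" by (rule DERIV_continuous)
    then show ?thesis using Lt by (simp add: continuous_within)
  qed
  have evI: "eventually (\<lambda>s. s \<in> I) (at t within I)"
    by (simp add: eventually_at_filter)
  have K6: "((\<lambda>s. ys s i) \<longlongrightarrow> 0) (at t within I)" if i: "i < n" for i
  proof -
    define N where "N s = Determinant.det (replace_col (A s) (Lv s) i)" for s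
    have Rcar: "replace_col (A s) (Lv s) i \<in> carrier_mat n n" for s
      using Acar[of s] by (auto simp: replace_col_def)
    have Nlim: "(N \<longlongrightarrow> Determinant.det (replace_col (A t) (Lv t) i)) (at t within I)"
      unfolding N_def
    proof (rule det_tendsto[OF Rcar Rcar])
      fix a b assume ab: "a < n" "b < n"
      show "((\<lambda>s. replace_col (A s) (Lv s) i $$ (a, b)) \<longlongrightarrow> replace_col (A t) (Lv t) i $$ (a, b)) (at t within I)"
      proof (cases "b = i")
        case True
        then show ?thesis using ab Lcont[OF ab(1)] by (simp add: replace_col_def Lv_def Lt dimA)
      next
        case False
        then show ?thesis using ab Acont[OF ab] by (simp add: replace_col_def dimA)
      qed
    qed
    have Lvt: "Lv t = A t *\<^sub>v 0\<^sub>v n"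
      using Acar[of t] by (intro eq_vecI) (auto simp: Lv_def Lt scalar_prod_def)
    have N0: "Determinant.det (replace_col (A t) (Lv t) i) = 0"
      unfolding Lvt using cramer_lemma_mat[OF Acar[of t] _ i, of "0\<^sub>v n"] i by simp
    have den: "((\<lambda>s. Determinant.det (A s)) \<longlongrightarrow> Determinant.det (A t)) (at t within I)"
      by (rule det_tendsto[OF Acar Acar[of t]]) (rule Acont)
    have lim: "((\<lambda>s. N s / Determinant.det (A s)) \<longlongrightarrow> 0 / Determinant.det (A t)) (at t within I)"
      using tendsto_divide[OF Nlim den K4] N0 by simp
    have ev: "eventually (\<lambda>s. Determinant.det (A s) \<noteq> 0) (at t within I)"
      using tendsto_imp_eventually_ne[OF den K4] .
    have "eventually (\<lambda>s. N s / Determinant.det (A s) = ys s i) (at t within I)"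
      using ev evI
    proof eventually_elim
      case (elim s)
      have "N s = vec_index (vec n (ys s)) i * Determinant.det (A s)"
        unfolding N_def K2[OF elim(2), symmetric] by (rule cramer_lemma_mat[OF Acar _ i]) simp
      then show ?case using elim(1) i by simp
    qed
    then show ?thesis using Lim_transform_eventually[OF lim] by simp
  qed
  have de: "(e has_real_derivative 0) (at t within I)"
  proof -
    have et: "e t = 0" unfolding e_def qt_def by simp
    obtain L' where L': "\<And>i. i < n \<Longrightarrow> (Lf i has_real_derivative L' i) (at t within I)"
      using Lder by metis
    have q: "((\<lambda>s. (Lf i s - Lf i t) / (s - t)) \<longlongrightarrow> L' i) (at t within I)" if "i < n" for i
      using L'[OF that] by (simp add: has_field_derivative_iff)
    have "((\<lambda>s. \<Sum>i<n. ys s i * ((Lf i s - Lf i t) / (s - t))) \<longlongrightarrow> (\<Sum>i<n. 0 * L' i)) (at t within I)"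
      by (intro tendsto_sum tendsto_mult K6 q) auto
    then have lim: "((\<lambda>s. \<Sum>i<n. ys s i * ((Lf i s - Lf i t) / (s - t))) \<longlongrightarrow> 0) (at t within I)" by simp
    have "eventually (\<lambda>s. (\<Sum>i<n. ys s i * ((Lf i s - Lf i t) / (s - t))) = (e s - e t) / (s - t)) (at t within I)"
      using evI
    proof eventually_elim
      case (elim s)
      show ?case using K3[OF elim] et by (simp add: Lt sum_divide_distrib)
    qed
    then have "((\<lambda>s. (e s - e t) / (s - t)) \<longlongrightarrow> 0) (at t within I)"
      using Lim_transform_eventually[OF lim] by simp
    then show ?thesis by (simp add: has_field_derivative_iff)
  qed
  have "((\<lambda>s. R s + e s) has_real_derivative 0) (at t within I)"
    using DERIV_add[OF dR de] by simp
  then show ?thesis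
    by (rule has_field_derivative_transform_within[where d=1]) (auto simp: t Z)
qed
end


lemma const_of_deriv0:
  fixes h :: "real \<Rightarrow> real"
  assumes "convex I" "\<And>t. t \<in> I \<Longrightarrow> (h has_real_derivative 0) (at t within I)" "s \<in> I" "t \<in> I"
  shows "h s = h t"
proof -
  obtain c where "\<forall>x\<in>I. h x = c" using has_field_derivative_zero_constant[of I h] assms(1,2) by blast
  then show ?thesis using assms(3,4) by auto
qed

theorem mainTheorem4:
  fixes M :: "'p measure" and k :: "'p \<Rightarrow> real^3"
    and Hone :: "('p \<Rightarrow> real) set" and grad :: "('p \<Rightarrow> real) \<Rightarrow> ('p \<Rightarrow> real^3)"
    and Hdiv :: "('p \<Rightarrow> real^3) set" and dvg :: "('p \<Rightarrow> real^3) \<Rightarrow> ('p \<Rightarrow> real)"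
    and mesh :: "'p set set"
    and V0 :: "('p \<Rightarrow> real) set" and V1 :: "('p \<Rightarrow> real^3) set" and V2 :: "('p \<Rightarrow> real) set"
    and g :: real and f b :: "'p \<Rightarrow> real" and I :: "real set"
    and u F Q :: "real \<Rightarrow> 'p \<Rightarrow> real^3" and D :: "real \<Rightarrow> 'p \<Rightarrow> real"
  assumes calc: "surface_calculus M k Hone grad Hdiv dvg"
    and spaces: "discrete_spaces M k Hone grad Hdiv dvg mesh V0 V1 V2"
    and g_pos: "g > 0"
    and f_Linf: "f \<in> borel_measurable M" "bounded_on M f"
    and b_V2: "b \<in> V2"
    and I_int: "is_interval I"
    and u_C1: "C1_curve V1 I u" and u_V1: "\<forall>t\<in>I. u t \<in> V1"
    and D_C1: "C1_curve V2 I D" and D_V2: "\<forall>t\<in>I. D t \<in> V2"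
    and D_pos: "\<forall>t\<in>I. \<forall>x\<in>space M. D t x > 0"
    and F_def: "\<forall>t\<in>I. F t \<in> V1 \<and>
                  (\<forall>w\<in>V1. integral\<^sup>L M (\<lambda>x. w x \<bullet> F t x) = integral\<^sup>L M (\<lambda>x. w x \<bullet> (D t x *\<^sub>R u t x)))"
    and Q_L2: "\<forall>t\<in>I. sq_int M (Q t) \<and> tangent M k (Q t)"
    and mom: "\<forall>t\<in>I. \<forall>w\<in>V1.
               ((\<lambda>s. integral\<^sup>L M (\<lambda>x. w x \<bullet> u s x)) has_real_derivative
                  (- integral\<^sup>L M (\<lambda>x. w x \<bullet> perp k (Q t) x)
                   + integral\<^sup>L M (\<lambda>x. dvg w x * (g * (D t x + b x) + (norm (u t x))\<^sup>2 / 2))))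
                (at t within I)"
    and cont: "\<forall>t\<in>I. \<forall>\<phi>\<in>V2.
               ((\<lambda>s. integral\<^sup>L M (\<lambda>x. \<phi> x * D s x)) has_real_derivative
                  (- integral\<^sup>L M (\<lambda>x. \<phi> x * dvg (F t) x)))
                (at t within I)"
  shows "((\<exists>q' :: real \<Rightarrow> 'p \<Rightarrow> real. \<forall>t\<in>I. Q t = (\<lambda>x. q' t x *\<^sub>R F t x)) \<longrightarrow>
            (\<forall>s\<in>I. \<forall>t\<in>I. energy M g b (u s) (D s) = energy M g b (u t) (D t)))
       \<and> (\<forall>\<zeta> q :: real \<Rightarrow> 'p \<Rightarrow> real.
            (\<forall>t\<in>I. is_disc_vorticity M k grad V0 (u t) (\<zeta> t) \<and>
                    is_disc_pv M V0 f (D t) (\<zeta> t) (q t) \<and>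
                    Q t = (\<lambda>x. q t x *\<^sub>R F t x)) \<longrightarrow>
            (\<forall>s\<in>I. \<forall>t\<in>I. energy M g b (u s) (D s) = energy M g b (u t) (D t) \<and>
                           enstrophy M (q s) (D s) = enstrophy M (q t) (D t)))"
proof (cases "\<exists>a\<in>I. \<exists>a'\<in>I. a \<noteq> a'")
  case False
  then have eq: "\<And>s t. s \<in> I \<Longrightarrow> t \<in> I \<Longrightarrow> s = t" by blast
  show ?thesis by (auto dest: eq)
next
  case True
  then obtain a a' where aa: "a \<in> I" "a' \<in> I" "a \<noteq> a'" by blast
  have nontriv: "\<forall>t\<in>I. at t within I \<noteq> bot"
  proof
    fix t assume t: "t \<in> I"
    have "connected I" using I_int by (rule is_interval_connected)
    moreover have "\<And>x. I \<noteq> {x}" using aa by auto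
    ultimately have "t islimpt I" using t by (intro connected_imp_perfect) auto
    then show "at t within I \<noteq> bot" using trivial_limit_within by blast
  qed
  obtain B1 c where B1: "finite B1" "B1 \<subseteq> V1" "\<forall>\<beta>\<in>B1. C1_on I (c \<beta>)" "\<forall>t\<in>I. u t = (\<lambda>x. \<Sum>\<beta>\<in>B1. c \<beta> t *\<^sub>R \<beta> x)"
    using u_C1 unfolding C1_curve_def by blast
  have "\<forall>\<beta>\<in>B1. \<exists>c'. \<forall>t\<in>I. (c \<beta> has_real_derivative c' t) (at t within I)"
    using B1(3) unfolding C1_on_def by blast
  then obtain c' where c': "\<forall>\<beta>\<in>B1. \<forall>t\<in>I. (c \<beta> has_real_derivative c' \<beta> t) (at t within I)"
    by metis
  obtain B2 d where B2: "finite B2" "B2 \<subseteq> V2" "\<forall>\<beta>\<in>B2. C1_on I (d \<beta>)" "\<forall>t\<in>I. D t = (\<lambda>x. \<Sum>\<beta>\<in>B2. d \<beta> t *\<^sub>R \<beta> x)"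
    using D_C1 unfolding C1_curve_def by blast
  have "\<forall>\<beta>\<in>B2. \<exists>d'. \<forall>t\<in>I. (d \<beta> has_real_derivative d' t) (at t within I)"
    using B2(3) unfolding C1_on_def by blast
  then obtain d' where d': "\<forall>\<beta>\<in>B2. \<forall>t\<in>I. (d \<beta> has_real_derivative d' \<beta> t) (at t within I)"
    by metis
  interpret sw M k Hone grad Hdiv dvg mesh V0 V1 V2 g f b I u F Q D B1 c c' B2 d d'
    using calc spaces f_Linf b_V2 u_V1 D_V2 D_pos F_def mom cont B1(1,2,4) c' B2(1,2,4) d' nontriv
    by unfold_locales auto
  have cI: "convex I" using I_int by (rule is_interval_convex)
  show ?thesis
  proof (intro conjI impI allI ballI)
    fix s t assume q'ex: "\<exists>q' :: real \<Rightarrow> 'p \<Rightarrow> real. \<forall>t\<in>I. Q t = (\<lambda>x. q' t x *\<^sub>R F t x)" and s: "s \<in> I" and t: "t \<in> I"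
    from q'ex obtain q' :: "real \<Rightarrow> 'p \<Rightarrow> real" where q': "\<forall>t\<in>I. Q t = (\<lambda>x. q' t x *\<^sub>R F t x)" by blast
    show "energy M g b (u s) (D s) = energy M g b (u t) (D t)"
      by (rule const_of_deriv0[OF cI energy_deriv[OF q'] s t])
  next
    fix \<zeta> q :: "real \<Rightarrow> 'p \<Rightarrow> real" and s t
    assume zq: "\<forall>t\<in>I. is_disc_vorticity M k grad V0 (u t) (\<zeta> t) \<and>
                    is_disc_pv M V0 f (D t) (\<zeta> t) (q t) \<and>
                    Q t = (\<lambda>x. q t x *\<^sub>R F t x)" and s: "s \<in> I" and t: "t \<in> I"
    have q': "\<forall>t\<in>I. Q t = (\<lambda>x. q t x *\<^sub>R F t x)" using zq by blast
    show "energy M g b (u s) (D s) = energy M g b (u t) (D t)"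
      by (rule const_of_deriv0[OF cI energy_deriv[OF q'] s t])
  next
    fix \<zeta> q :: "real \<Rightarrow> 'p \<Rightarrow> real" and s t
    assume zq: "\<forall>t\<in>I. is_disc_vorticity M k grad V0 (u t) (\<zeta> t) \<and>
                    is_disc_pv M V0 f (D t) (\<zeta> t) (q t) \<and>
                    Q t = (\<lambda>x. q t x *\<^sub>R F t x)" and s: "s \<in> I" and t: "t \<in> I"
    show "enstrophy M (q s) (D s) = enstrophy M (q t) (D t)"
      by (rule const_of_deriv0[OF cI enstrophy_deriv[OF zq] s t])
  qed
qed


end
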